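(* Let $\epsilon\in\{1,-1\}$ and let $\Phi,\Psi$ be bounded operators on $\ell^2$ satisfying $$\Phi\Phi^\dagger=1+\epsilon\Psi\Psi^\dagger,\quad \Phi^\dagger\Phi=1+\epsilon\Psi^T\bar\Psi,\quad \Phi\Psi^T=\epsilon\Psi\Phi^T,\quad \Phi^\dagger\Psi=\epsilon\Psi^T\bar\Phi,$$ with $\Phi$ having a bounded inverse. Put $X:=\bar\Psi\Phi^{-1}$. Then: (i) if $\epsilon=1$, $\|X\|<1$; (ii) for every orthogonal projector $\tilde P$ on $\ell^2$, the operators $$Y:=1-\epsilon X^\dagger\tilde P^TX\tilde P,\qquad \tilde Y:=1-\epsilon X\tilde PX^\dagger\tilde P^T$$ have bounded inverses, for both $\epsilon=1$ and $\epsilon=-1$.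
   Context: Operators are written as matrices in a fixed orthonormal basis of $\ell^2$; bar denotes entrywise complex conjugation, $T$ the transpose, $\dagger$ the adjoint. $\|\cdot\|$ is the operator norm. *)

theory Defs
  imports Complex_Main
begin

text \<open>Operators on l2 (square-summable complex sequences indexed by nat) are
represented by their matrices in the fixed orthonormal basis.\<close>

type_synonym cmat = "nat \<Rightarrow> nat \<Rightarrow> complex"

definition l2 :: "(nat \<Rightarrow> complex) set" where
  "l2 = {x. summable (\<lambda>n. (cmod (x n))^2)}"

definition l2norm :: "(nat \<Rightarrow> complex) \<Rightarrow> real" where
  "l2norm x = sqrt (\<Sum>n. (cmod (x n))^2)"

definition mat_apply :: "cmat \<Rightarrow> (nat \<Rightarrow> complex) \<Rightarrow> (nat \<Rightarrow> complex)" where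
  "mat_apply A x = (\<lambda>i. \<Sum>j. A i j * x j)"

definition bounded_mat :: "cmat \<Rightarrow> bool" where
  "bounded_mat A \<longleftrightarrow> (\<exists>C. \<forall>x\<in>l2. (\<forall>i. summable (\<lambda>j. A i j * x j))
      \<and> mat_apply A x \<in> l2 \<and> l2norm (mat_apply A x) \<le> C * l2norm x)"

definition op_norm :: "cmat \<Rightarrow> real" where
  "op_norm A = Sup {l2norm (mat_apply A x) | x. x \<in> l2 \<and> l2norm x \<le> 1}"

definition mat_mult :: "cmat \<Rightarrow> cmat \<Rightarrow> cmat" (infixl "**\<^sub>m" 70) where
  "mat_mult A B = (\<lambda>i k. \<Sum>j. A i j * B j k)"

definition mat_id :: cmat where
  "mat_id = (\<lambda>i j. if i = j then 1 else 0)"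

definition mat_add :: "cmat \<Rightarrow> cmat \<Rightarrow> cmat" where
  "mat_add A B = (\<lambda>i j. A i j + B i j)"

definition mat_diff :: "cmat \<Rightarrow> cmat \<Rightarrow> cmat" where
  "mat_diff A B = (\<lambda>i j. A i j - B i j)"

definition mat_scale :: "complex \<Rightarrow> cmat \<Rightarrow> cmat" where
  "mat_scale c A = (\<lambda>i j. c * A i j)"

definition mat_conj :: "cmat \<Rightarrow> cmat" where
  "mat_conj A = (\<lambda>i j. cnj (A i j))"

definition mat_transpose :: "cmat \<Rightarrow> cmat" where
  "mat_transpose A = (\<lambda>i j. A j i)"

definition mat_adj :: "cmat \<Rightarrow> cmat" where
  "mat_adj A = (\<lambda>i j. cnj (A j i))"

definition has_bounded_inverse :: "cmat \<Rightarrow> bool" where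
  "has_bounded_inverse A \<longleftrightarrow>
     (\<exists>B. bounded_mat B \<and> A **\<^sub>m B = mat_id \<and> B **\<^sub>m A = mat_id)"

definition mat_inv :: "cmat \<Rightarrow> cmat" where
  "mat_inv A = (SOME B. bounded_mat B \<and> A **\<^sub>m B = mat_id \<and> B **\<^sub>m A = mat_id)"

definition orth_proj :: "cmat \<Rightarrow> bool" where
  "orth_proj P \<longleftrightarrow> bounded_mat P \<and> P **\<^sub>m P = P \<and> mat_adj P = P"

end

theory Submission
  imports Defs "HOL-Analysis.Infinite_Sum" "HOL-Analysis.L2_Norm" "HOL-Analysis.Elementary_Normed_Spaces"
begin

definition ip :: "(nat \<Rightarrow> complex) \<Rightarrow> (nat \<Rightarrow> complex) \<Rightarrow> complex" where
  "ip x y = (\<Sum>n. x n * cnj (y n))"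

definition ev :: "nat \<Rightarrow> nat \<Rightarrow> complex" where
  "ev k = (\<lambda>i. if i = k then 1 else 0)"

definition trunc :: "nat \<Rightarrow> (nat \<Rightarrow> complex) \<Rightarrow> nat \<Rightarrow> complex" where
  "trunc N x = (\<lambda>i. if i < N then x i else 0)"

lemma l2_iff: "x \<in> l2 \<longleftrightarrow> summable (\<lambda>n. (cmod (x n))^2)"
  by (simp add: l2_def)

lemma l2norm_nonneg: "x \<in> l2 \<Longrightarrow> l2norm x \<ge> 0"
  unfolding l2norm_def l2_iff by (simp add: suminf_nonneg)

lemma l2norm_sq: "x \<in> l2 \<Longrightarrow> (l2norm x)^2 = (\<Sum>n. (cmod (x n))^2)"
proof -
  assume "x \<in> l2"
  then have "summable (\<lambda>n. (cmod (x n))^2)" by (simp add: l2_iff)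
  then have "0 \<le> (\<Sum>n. (cmod (x n))^2)" by (rule suminf_nonneg) auto
  then show ?thesis unfolding l2norm_def by simp
qed

lemma l2_prod_summable:
  assumes "x \<in> l2" "y \<in> l2"
  shows "summable (\<lambda>n. cmod (x n) * cmod (y n))"
proof (rule summable_comparison_test')
  show "summable (\<lambda>n. ((cmod (x n))^2 + (cmod (y n))^2))"
    using assms by (intro summable_add) (auto simp: l2_iff)
  fix n
  have "2 * (cmod (x n) * cmod (y n)) \<le> (cmod (x n))^2 + (cmod (y n))^2"
    using sum_squares_bound[of "cmod (x n)" "cmod (y n)"] by (simp add: algebra_simps)
  then have "cmod (x n) * cmod (y n) \<le> (cmod (x n))^2 + (cmod (y n))^2"
    by (smt (verit) mult_nonneg_nonneg norm_ge_zero)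
  then show "norm (cmod (x n) * cmod (y n)) \<le> (cmod (x n))^2 + (cmod (y n))^2"
    by simp
qed

lemma l2_prod_summable_c:
  assumes "x \<in> l2" "y \<in> l2"
  shows "summable (\<lambda>n. cmod (x n * y n))" "summable (\<lambda>n. x n * y n)"
  using l2_prod_summable[OF assms] by (auto simp: norm_mult intro: summable_norm_cancel)

lemma l2_CS_abs:
  assumes "x \<in> l2" "y \<in> l2"
  shows "(\<Sum>n. cmod (x n) * cmod (y n)) \<le> l2norm x * l2norm y"
proof (rule suminf_le_const[OF l2_prod_summable[OF assms]])
  fix N
  have "(\<Sum>n<N. cmod (x n) * cmod (y n)) = (\<Sum>n<N. \<bar>cmod (x n)\<bar> * \<bar>cmod (y n)\<bar>)" by simp
  also have "\<dots> \<le> L2_set (\<lambda>n. cmod (x n)) {..<N} * L2_set (\<lambda>n. cmod (y n)) {..<N}"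
    by (rule L2_set_mult_ineq)
  also have "\<dots> \<le> l2norm x * l2norm y"
  proof (intro mult_mono)
    show "L2_set (\<lambda>n. cmod (x n)) {..<N} \<le> l2norm x"
      unfolding L2_set_def l2norm_def using assms
      by (intro real_sqrt_le_mono sum_le_suminf) (auto simp: l2_iff)
    show "L2_set (\<lambda>n. cmod (y n)) {..<N} \<le> l2norm y"
      unfolding L2_set_def l2norm_def using assms
      by (intro real_sqrt_le_mono sum_le_suminf) (auto simp: l2_iff)
  qed (auto simp: l2norm_nonneg assms L2_set_def intro: sum_nonneg)
  finally show "(\<Sum>n<N. cmod (x n) * cmod (y n)) \<le> l2norm x * l2norm y" .
qed

lemma l2_CS:
  assumes "x \<in> l2" "y \<in> l2"
  shows "cmod (\<Sum>n. x n * y n) \<le> l2norm x * l2norm y"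
proof -
  have "cmod (\<Sum>n. x n * y n) \<le> (\<Sum>n. cmod (x n * y n))"
    by (rule summable_norm) (rule l2_prod_summable_c[OF assms])
  also have "\<dots> = (\<Sum>n. cmod (x n) * cmod (y n))" by (simp add: norm_mult)
  also have "\<dots> \<le> l2norm x * l2norm y" by (rule l2_CS_abs[OF assms])
  finally show ?thesis .
qed

lemma l2_cnj: "x \<in> l2 \<Longrightarrow> (\<lambda>n. cnj (x n)) \<in> l2"
  by (simp add: l2_iff)

lemma l2norm_cnj: "l2norm (\<lambda>n. cnj (x n)) = l2norm x"
  by (simp add: l2norm_def)

lemma l2_zero: "(\<lambda>n. 0) \<in> l2"
  by (simp add: l2_iff)

lemma l2norm_zero: "l2norm (\<lambda>n. 0) = 0"
  by (simp add: l2norm_def)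

lemma l2_scale: "x \<in> l2 \<Longrightarrow> (\<lambda>n. c * x n) \<in> l2"
  by (simp add: l2_iff norm_mult power_mult_distrib summable_mult)

lemma l2norm_scale: "x \<in> l2 \<Longrightarrow> l2norm (\<lambda>n. c * x n) = cmod c * l2norm x"
  unfolding l2norm_def using suminf_mult[of "\<lambda>n. (cmod (x n))^2" "(cmod c)^2"]
  by (simp add: l2_iff norm_mult power_mult_distrib real_sqrt_mult)

lemma l2_add:
  assumes "x \<in> l2" "y \<in> l2"
  shows "(\<lambda>n. x n + y n) \<in> l2"
  unfolding l2_iff
proof (rule summable_comparison_test')
  show "summable (\<lambda>n. 2 * (cmod (x n))^2 + 2 * (cmod (y n))^2)"
    using assms by (intro summable_add summable_mult) (auto simp: l2_iff)
  fix n
  have "cmod (x n + y n) \<le> cmod (x n) + cmod (y n)" by (rule norm_triangle_ineq)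
  then have "(cmod (x n + y n))^2 \<le> (cmod (x n) + cmod (y n))^2"
    by (intro power_mono) auto
  also have "\<dots> \<le> 2 * (cmod (x n))^2 + 2 * (cmod (y n))^2"
    using sum_squares_bound[of "cmod (x n)" "cmod (y n)"] by (simp add: power2_eq_square algebra_simps)
  finally show "norm ((cmod (x n + y n))^2) \<le> 2 * (cmod (x n))^2 + 2 * (cmod (y n))^2" by simp
qed

lemma l2_uminus: "x \<in> l2 \<Longrightarrow> (\<lambda>n. - x n) \<in> l2"
  by (simp add: l2_iff)

lemma l2_diff: "x \<in> l2 \<Longrightarrow> y \<in> l2 \<Longrightarrow> (\<lambda>n. x n - y n) \<in> l2"
  using l2_add[OF _ l2_uminus] by simp

lemma l2_ev: "ev k \<in> l2"
  unfolding l2_iff ev_def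
  by (rule summable_finite[of "{k}"]) auto

lemma l2norm_ev: "l2norm (ev k) = 1"
  unfolding l2norm_def ev_def
  by (subst suminf_finite[of "{k}"]) auto

lemma l2_trunc: "trunc N x \<in> l2"
  unfolding l2_iff trunc_def
  by (rule summable_finite[of "{..<N}"]) auto

lemma l2norm_trunc_sq: "(l2norm (trunc N x))^2 = (\<Sum>n<N. (cmod (x n))^2)"
  unfolding l2norm_def trunc_def
  by (subst suminf_finite[of "{..<N}"]) (auto intro: sum_nonneg)

lemma coord_le: "x \<in> l2 \<Longrightarrow> cmod (x i) \<le> l2norm x"
proof -
  assume "x \<in> l2"
  then have "(cmod (x i))^2 \<le> (\<Sum>n. (cmod (x n))^2)"
    using sum_le_suminf[of "\<lambda>n. (cmod (x n))^2" "{i}"] by (auto simp: l2_iff)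
  then show ?thesis unfolding l2norm_def by (simp add: real_le_rsqrt)
qed

lemma ip_self: "x \<in> l2 \<Longrightarrow> ip x x = complex_of_real ((l2norm x)^2)"
proof -
  assume x: "x \<in> l2"
  have "ip x x = (\<Sum>n. complex_of_real ((cmod (x n))^2))"
    unfolding ip_def by (simp only: complex_norm_square)
  also have "\<dots> = complex_of_real (\<Sum>n. (cmod (x n))^2)"
    using x by (simp add: l2_iff suminf_of_real)
  finally show ?thesis using l2norm_sq[OF x] by simp
qed

lemma ip_summable: "x \<in> l2 \<Longrightarrow> y \<in> l2 \<Longrightarrow> summable (\<lambda>n. x n * cnj (y n))"
  using l2_prod_summable_c(2)[OF _ l2_cnj] by blast

lemma ip_CS: "x \<in> l2 \<Longrightarrow> y \<in> l2 \<Longrightarrow> cmod (ip x y) \<le> l2norm x * l2norm y"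
  unfolding ip_def using l2_CS[OF _ l2_cnj, of x y] by (simp add: l2norm_cnj)

lemma l2norm_add_sq:
  assumes x: "x \<in> l2" and y: "y \<in> l2"
  shows "(l2norm (\<lambda>n. x n + y n))^2 = (l2norm x)^2 + (l2norm y)^2 + 2 * Re (ip x y)"
proof -
  have e: "\<And>n. (cmod (x n + y n))^2 = (cmod (x n))^2 + (cmod (y n))^2 + 2 * Re (x n * cnj (y n))"
    unfolding cmod_power2 by (simp add: power2_eq_square algebra_simps)
  have s1: "summable (\<lambda>n. (cmod (x n))^2)" "summable (\<lambda>n. (cmod (y n))^2)"
    using x y by (auto simp: l2_iff)
  have s3: "summable (\<lambda>n. 2 * Re (x n * cnj (y n)))"
    by (intro summable_mult summable_Re ip_summable x y)
  have "(l2norm (\<lambda>n. x n + y n))^2 = (\<Sum>n. (cmod (x n + y n))^2)"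
    by (rule l2norm_sq[OF l2_add[OF x y]])
  also have "\<dots> = (\<Sum>n. (cmod (x n))^2 + (cmod (y n))^2 + 2 * Re (x n * cnj (y n)))"
    by (simp only: e)
  also have "\<dots> = (\<Sum>n. (cmod (x n))^2) + (\<Sum>n. (cmod (y n))^2) + (\<Sum>n. 2 * Re (x n * cnj (y n)))"
    using s1 s3 by (simp add: suminf_add summable_add)
  also have "(\<Sum>n. 2 * Re (x n * cnj (y n))) = 2 * Re (ip x y)"
  proof -
    have r: "(\<Sum>n. Re (x n * cnj (y n))) = Re (ip x y)"
      unfolding ip_def by (rule Re_suminf[OF ip_summable[OF x y], symmetric])
    have "(\<Sum>n. 2 * Re (x n * cnj (y n))) = 2 * (\<Sum>n. Re (x n * cnj (y n)))"
      by (rule suminf_mult[OF summable_Re[OF ip_summable[OF x y]]])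
    then show ?thesis using r by simp
  qed
  finally show ?thesis using l2norm_sq[OF x] l2norm_sq[OF y] by simp
qed

lemma l2norm_triangle:
  assumes x: "x \<in> l2" and y: "y \<in> l2"
  shows "l2norm (\<lambda>n. x n + y n) \<le> l2norm x + l2norm y"
proof -
  have "Re (ip x y) \<le> cmod (ip x y)" by (rule complex_Re_le_cmod)
  also have "\<dots> \<le> l2norm x * l2norm y" by (rule ip_CS[OF x y])
  finally have "(l2norm (\<lambda>n. x n + y n))^2 \<le> (l2norm x + l2norm y)^2"
    using l2norm_add_sq[OF x y] by (simp add: power2_eq_square algebra_simps)
  then show ?thesis
    using l2norm_nonneg[OF x] l2norm_nonneg[OF y] l2norm_nonneg[OF l2_add[OF x y]]
    by (meson power2_le_imp_le add_nonneg_nonneg)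
qed

lemma l2norm_tail:
  assumes x: "x \<in> l2"
  shows "(\<lambda>N. l2norm (\<lambda>n. x n - trunc N x n)) \<longlonglongrightarrow> 0"
proof -
  let ?f = "\<lambda>n. (cmod (x n))^2"
  have sf: "summable ?f" using x by (simp add: l2_iff)
  have eq: "l2norm (\<lambda>n. x n - trunc N x n) = sqrt ((\<Sum>n. ?f n) - (\<Sum>n<N. ?f n))" for N
  proof -
    have "(\<lambda>n. (cmod (x n - trunc N x n))^2) = (\<lambda>n. ?f n - (if n < N then ?f n else 0))"
      by (auto simp: trunc_def)
    moreover have "(\<Sum>n. ?f n - (if n < N then ?f n else 0)) = (\<Sum>n. ?f n) - (\<Sum>n<N. ?f n)"
    proof -
      have s2: "summable (\<lambda>n. if n < N then ?f n else 0)"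
        by (rule summable_finite[of "{..<N}"]) auto
      have "(\<Sum>n. if n < N then ?f n else 0) = (\<Sum>n<N. ?f n)"
        by (subst suminf_finite[of "{..<N}"]) auto
      then show ?thesis using suminf_diff[OF sf s2] by simp
    qed
    ultimately show ?thesis unfolding l2norm_def by simp
  qed
  have "(\<lambda>N. (\<Sum>n. ?f n) - (\<Sum>n<N. ?f n)) \<longlonglongrightarrow> (\<Sum>n. ?f n) - (\<Sum>n. ?f n)"
    by (intro tendsto_diff tendsto_const summable_LIMSEQ sf)
  then have "(\<lambda>N. sqrt ((\<Sum>n. ?f n) - (\<Sum>n<N. ?f n))) \<longlonglongrightarrow> sqrt 0"
    by (intro tendsto_real_sqrt) simp
  then show ?thesis by (simp add: eq)
qed

lemma l2_from_partial:
  assumes K: "K \<ge> 0" and b: "\<And>N. (\<Sum>n<N. (cmod (v n))^2) \<le> K^2"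
  shows "v \<in> l2" "l2norm v \<le> K"
proof -
  show v: "v \<in> l2" unfolding l2_iff
    by (rule summableI_nonneg_bounded[OF _ b]) auto
  have "(\<Sum>n. (cmod (v n))^2) \<le> K^2"
    by (rule suminf_le_const) (use v b in \<open>auto simp: l2_iff\<close>)
  then show "l2norm v \<le> K" unfolding l2norm_def using K
    by (simp add: real_sqrt_le_iff real_le_lsqrt)
qed

lemma sq_bound:
  fixes S D :: real
  assumes "S \<ge> 0" "D \<ge> 0" "S \<le> D * sqrt S"
  shows "S \<le> D^2"
proof (cases "S = 0")
  case True then show ?thesis by simp
next
  case False
  then have "sqrt S > 0" using assms by simp
  have "sqrt S * sqrt S \<le> D * sqrt S" using assms by simp
  then have "sqrt S \<le> D" using \<open>sqrt S > 0\<close> by (rule mult_right_le_imp_le)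
  then have "sqrt S ^ 2 \<le> D ^ 2" using assms by (intro power_mono) auto
  then show ?thesis using assms by simp
qed

definition bnd :: "cmat \<Rightarrow> real \<Rightarrow> bool" where
  "bnd A C \<longleftrightarrow> C \<ge> 0 \<and> (\<forall>x\<in>l2. (\<forall>i. summable (\<lambda>j. A i j * x j))
      \<and> mat_apply A x \<in> l2 \<and> l2norm (mat_apply A x) \<le> C * l2norm x)"

lemma bounded_mat_bnd: "bounded_mat A \<longleftrightarrow> (\<exists>C. bnd A C)"
proof
  assume "bounded_mat A"
  then obtain C where C: "\<forall>x\<in>l2. (\<forall>i. summable (\<lambda>j. A i j * x j))
      \<and> mat_apply A x \<in> l2 \<and> l2norm (mat_apply A x) \<le> C * l2norm x"
    unfolding bounded_mat_def by blast
  have "bnd A (max C 0)"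
    unfolding bnd_def
  proof (intro conjI ballI)
    fix x assume x: "x \<in> l2"
    then show "\<forall>i. summable (\<lambda>j. A i j * x j)" "mat_apply A x \<in> l2" using C by auto
    have "C * l2norm x \<le> max C 0 * l2norm x"
      by (intro mult_right_mono l2norm_nonneg x) simp
    then show "l2norm (mat_apply A x) \<le> max C 0 * l2norm x" using C x by fastforce
  qed simp
  then show "\<exists>C. bnd A C" by blast
next
  assume "\<exists>C. bnd A C"
  then show "bounded_mat A" unfolding bounded_mat_def bnd_def by blast
qed

lemma bndD:
  assumes "bnd A C" "x \<in> l2"
  shows "summable (\<lambda>j. A i j * x j)" "mat_apply A x \<in> l2"
    "l2norm (mat_apply A x) \<le> C * l2norm x" "C \<ge> 0"
  using assms unfolding bnd_def by auto

lemma bnd_mono: assumes "bnd A C" "C \<le> D" shows "bnd A D"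
  unfolding bnd_def
proof (intro conjI ballI)
  show "D \<ge> 0" using assms by (simp add: bnd_def)
  fix x assume x: "x \<in> l2"
  show "\<forall>i. summable (\<lambda>j. A i j * x j)" "mat_apply A x \<in> l2" using bndD[OF assms(1) x] by auto
  have "C * l2norm x \<le> D * l2norm x" by (intro mult_right_mono assms l2norm_nonneg x)
  then show "l2norm (mat_apply A x) \<le> D * l2norm x" using bndD(3)[OF assms(1) x] by simp
qed

lemma apply_trunc:
  "mat_apply A (trunc N z) j = (\<Sum>k<N. A j k * z k)"
  unfolding mat_apply_def trunc_def
  by (subst suminf_finite[of "{..<N}"]) auto

lemma apply_ev: "mat_apply A (ev k) = (\<lambda>i. A i k)"
  unfolding mat_apply_def ev_def
  by (rule ext, subst suminf_finite[of "{k}"]) auto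

lemma bnd_col:
  assumes "bnd A C"
  shows "(\<lambda>i. A i k) \<in> l2" "l2norm (\<lambda>i. A i k) \<le> C"
  using bndD(2,3)[OF assms l2_ev, of k] by (auto simp: apply_ev l2norm_ev)

lemma bnd_row:
  assumes A: "bnd A C"
  shows "(\<lambda>j. A i j) \<in> l2" "l2norm (\<lambda>j. A i j) \<le> C"
proof -
  have C: "C \<ge> 0" using A by (simp add: bnd_def)
  have b: "(\<Sum>n<N. (cmod (A i n))^2) \<le> C^2" for N
  proof -
    let ?z = "trunc N (\<lambda>j. cnj (A i j))"
    let ?S = "(\<Sum>n<N. (cmod (A i n))^2)"
    have S0: "?S \<ge> 0" by (intro sum_nonneg) auto
    have "mat_apply A ?z i = (\<Sum>k<N. A i k * cnj (A i k))" by (rule apply_trunc)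
    also have "\<dots> = (\<Sum>k<N. complex_of_real ((cmod (A i k))^2))" by (simp only: complex_norm_square)
    also have "\<dots> = complex_of_real ?S" by (simp only: of_real_sum)
    finally have e: "mat_apply A ?z i = complex_of_real ?S" .
    have nz: "l2norm ?z = sqrt ?S"
      using l2norm_trunc_sq[of N "\<lambda>j. cnj (A i j)"] l2norm_nonneg[OF l2_trunc]
      by (metis (no_types, lifting) complex_mod_cnj real_sqrt_abs sum.cong abs_of_nonneg)
    have "?S = cmod (mat_apply A ?z i)" unfolding e using S0 by (simp only: norm_of_real abs_of_nonneg)
    also have "\<dots> \<le> l2norm (mat_apply A ?z)" by (rule coord_le[OF bndD(2)[OF A l2_trunc]])
    also have "\<dots> \<le> C * sqrt ?S" using bndD(3)[OF A l2_trunc, of N "\<lambda>j. cnj (A i j)"] nz by simp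
    finally show ?thesis using sq_bound[OF S0 C] by simp
  qed
  show "(\<lambda>j. A i j) \<in> l2" "l2norm (\<lambda>j. A i j) \<le> C"
    using l2_from_partial[OF C b] by auto
qed

lemma apply_summable:
  assumes A: "bnd A C" and x: "x \<in> l2"
  shows "summable (\<lambda>j. A i j * x j)" "summable (\<lambda>j. cmod (A i j * x j))"
  using l2_prod_summable_c[OF bnd_row(1)[OF A] x] by auto

lemma apply_add:
  assumes A: "bnd A C" and x: "x \<in> l2" and y: "y \<in> l2"
  shows "mat_apply A (\<lambda>n. x n + y n) = (\<lambda>i. mat_apply A x i + mat_apply A y i)"
  unfolding mat_apply_def
  by (rule ext, simp add: distrib_left suminf_add[OF apply_summable(1)[OF A x] apply_summable(1)[OF A y]])

lemma apply_scale:
  assumes A: "bnd A C" and x: "x \<in> l2"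
  shows "mat_apply A (\<lambda>n. c * x n) = (\<lambda>i. c * mat_apply A x i)"
  unfolding mat_apply_def
proof (rule ext)
  fix i
  have "(\<Sum>j. A i j * (c * x j)) = (\<Sum>j. c * (A i j * x j))" by (simp add: algebra_simps)
  also have "\<dots> = c * (\<Sum>j. A i j * x j)" by (rule suminf_mult[OF apply_summable(1)[OF A x]])
  finally show "(\<Sum>j. A i j * (c * x j)) = c * (\<Sum>j. A i j * x j)" .
qed

lemma apply_diff:
  assumes A: "bnd A C" and x: "x \<in> l2" and y: "y \<in> l2"
  shows "mat_apply A (\<lambda>n. x n - y n) = (\<lambda>i. mat_apply A x i - mat_apply A y i)"
  unfolding mat_apply_def
  by (rule ext, simp add: right_diff_distrib suminf_diff[OF apply_summable(1)[OF A x] apply_summable(1)[OF A y]])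

lemma apply_zero: "mat_apply A (\<lambda>n. 0) = (\<lambda>i. 0)"
  by (simp add: mat_apply_def)

lemma summable_cnj_iff: "summable (\<lambda>n. cnj (f n)) \<longleftrightarrow> summable f"
  unfolding summable_def by (metis sums_cnj complex_cnj_cnj)

lemma suminf_cnj: "summable f \<Longrightarrow> (\<Sum>n. cnj (f n)) = cnj (suminf f)"
  by (metis sums_cnj summable_sums sums_unique)

lemma key_fin:
  assumes B: "bnd B C" and a: "a \<in> l2"
  shows "(\<Sum>j. a j * mat_apply B (trunc N w) j) = (\<Sum>k<N. (\<Sum>j. a j * B j k) * w k)"
proof -
  have s: "summable (\<lambda>j. a j * B j k)" for k
    by (rule l2_prod_summable_c(2)[OF a bnd_col(1)[OF B]])
  have "(\<Sum>j. a j * mat_apply B (trunc N w) j) = (\<Sum>j. \<Sum>k<N. a j * B j k * w k)"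
    by (simp add: apply_trunc sum_distrib_left mult.assoc)
  also have "\<dots> = (\<Sum>k<N. \<Sum>j. a j * B j k * w k)"
    by (rule suminf_sum) (intro summable_mult2 s)
  also have "\<dots> = (\<Sum>k<N. (\<Sum>j. a j * B j k) * w k)"
    by (intro sum.cong refl suminf_mult2[symmetric] s)
  finally show ?thesis .
qed

lemma key_l2:
  assumes B: "bnd B C" and a: "a \<in> l2"
  shows "(\<lambda>k. \<Sum>j. a j * B j k) \<in> l2" "l2norm (\<lambda>k. \<Sum>j. a j * B j k) \<le> C * l2norm a"
proof -
  let ?b = "\<lambda>k. \<Sum>j. a j * B j k"
  have C: "C \<ge> 0" using B by (simp add: bnd_def)
  have an: "l2norm a \<ge> 0" by (rule l2norm_nonneg[OF a])
  have bd: "(\<Sum>n<N. (cmod (?b n))^2) \<le> (C * l2norm a)^2" for N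
  proof -
    let ?T = "(\<Sum>n<N. (cmod (?b n))^2)"
    let ?z = "trunc N (\<lambda>k. cnj (?b k))"
    have T0: "?T \<ge> 0" by (intro sum_nonneg) auto
    have "(\<Sum>j. a j * mat_apply B ?z j) = (\<Sum>k<N. ?b k * cnj (?b k))"
      by (rule key_fin[OF B a])
    also have "\<dots> = (\<Sum>k<N. complex_of_real ((cmod (?b k))^2))" by (simp only: complex_norm_square)
    also have "\<dots> = complex_of_real ?T" by (simp only: of_real_sum)
    finally have e: "(\<Sum>j. a j * mat_apply B ?z j) = complex_of_real ?T" .
    have nz: "l2norm ?z = sqrt ?T"
      using l2norm_trunc_sq[of N "\<lambda>k. cnj (?b k)"] l2norm_nonneg[OF l2_trunc]
      by (metis (no_types, lifting) complex_mod_cnj real_sqrt_abs sum.cong abs_of_nonneg)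
    have "?T = cmod (\<Sum>j. a j * mat_apply B ?z j)" unfolding e using T0
      by (simp only: norm_of_real abs_of_nonneg)
    also have "\<dots> \<le> l2norm a * l2norm (mat_apply B ?z)"
      by (rule l2_CS[OF a bndD(2)[OF B l2_trunc]])
    also have "\<dots> \<le> l2norm a * (C * sqrt ?T)"
      using bndD(3)[OF B l2_trunc, of N "\<lambda>k. cnj (?b k)"] nz an by (simp add: mult_left_mono)
    finally have "?T \<le> (C * l2norm a) * sqrt ?T" by (simp add: algebra_simps)
    then show ?thesis using sq_bound[OF T0] C an by simp
  qed
  show "?b \<in> l2" "l2norm ?b \<le> C * l2norm a"
    using l2_from_partial[OF _ bd] C an by auto
qed

lemma key_eq:
  assumes B: "bnd B C" and a: "a \<in> l2" and x: "x \<in> l2"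
  shows "(\<Sum>j. a j * mat_apply B x j) = (\<Sum>k. (\<Sum>j. a j * B j k) * x k)"
proof -
  let ?b = "\<lambda>k. \<Sum>j. a j * B j k"
  let ?L = "\<lambda>y. (\<Sum>j. a j * mat_apply B y j)"
  have C: "C \<ge> 0" using B by (simp add: bnd_def)
  have fin: "?L (trunc N x) = (\<Sum>k<N. ?b k * x k)" for N
    using key_fin[OF B a] by (simp add: trunc_def)
  have r: "(\<lambda>N. (\<Sum>k<N. ?b k * x k)) \<longlonglongrightarrow> (\<Sum>k. ?b k * x k)"
    by (intro summable_LIMSEQ l2_prod_summable_c(2)[OF key_l2(1)[OF B a] x])
  have diff: "norm (?L x - ?L (trunc N x)) \<le> l2norm a * (C * l2norm (\<lambda>n. x n - trunc N x n))" for N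
  proof -
    have xd: "(\<lambda>n. x n - trunc N x n) \<in> l2" by (rule l2_diff[OF x l2_trunc])
    have "?L x - ?L (trunc N x) = (\<Sum>j. a j * mat_apply B x j - a j * mat_apply B (trunc N x) j)"
      by (rule suminf_diff[OF l2_prod_summable_c(2)[OF a bndD(2)[OF B x]]
              l2_prod_summable_c(2)[OF a bndD(2)[OF B l2_trunc]]])
    also have "\<dots> = (\<Sum>j. a j * mat_apply B (\<lambda>n. x n - trunc N x n) j)"
      unfolding apply_diff[OF B x l2_trunc] by (simp only: right_diff_distrib)
    finally have eqd: "?L x - ?L (trunc N x) = (\<Sum>j. a j * mat_apply B (\<lambda>n. x n - trunc N x n) j)" .
    have "norm (\<Sum>j. a j * mat_apply B (\<lambda>n. x n - trunc N x n) j) \<le> l2norm a * l2norm (mat_apply B (\<lambda>n. x n - trunc N x n))"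
      by (rule l2_CS[OF a bndD(2)[OF B xd]])
    also have "\<dots> \<le> l2norm a * (C * l2norm (\<lambda>n. x n - trunc N x n))"
      by (intro mult_left_mono bndD(3)[OF B xd] l2norm_nonneg[OF a])
    finally show ?thesis unfolding eqd .
  qed
  have "(\<lambda>N. l2norm a * (C * l2norm (\<lambda>n. x n - trunc N x n))) \<longlonglongrightarrow> l2norm a * (C * 0)"
    by (intro tendsto_mult tendsto_const l2norm_tail[OF x])
  then have g0: "(\<lambda>N. l2norm a * (C * l2norm (\<lambda>n. x n - trunc N x n))) \<longlonglongrightarrow> 0" by simp
  have "(\<lambda>N. ?L x - ?L (trunc N x)) \<longlonglongrightarrow> 0"
    by (rule Lim_null_comparison[OF always_eventually[OF allI[OF diff]] g0])
  then have "(\<lambda>N. ?L x - (?L x - ?L (trunc N x))) \<longlonglongrightarrow> ?L x - 0"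
    by (intro tendsto_diff tendsto_const)
  then have "(\<lambda>N. ?L (trunc N x)) \<longlonglongrightarrow> ?L x" by simp
  then have "(\<lambda>N. (\<Sum>k<N. ?b k * x k)) \<longlonglongrightarrow> ?L x" by (simp only: fin)
  then show ?thesis using r by (rule LIMSEQ_unique)
qed

lemma mult_entry: "(A **\<^sub>m B) i k = (\<Sum>j. A i j * B j k)"
  by (simp add: mat_mult_def)

lemma bnd_mult:
  assumes A: "bnd A CA" and B: "bnd B CB"
  shows "bnd (A **\<^sub>m B) (CA * CB)"
    "\<And>x. x \<in> l2 \<Longrightarrow> mat_apply (A **\<^sub>m B) x = mat_apply A (mat_apply B x)"
proof -
  have CA: "CA \<ge> 0" and CB: "CB \<ge> 0" using A B by (auto simp: bnd_def)
  have ap: "mat_apply (A **\<^sub>m B) x = mat_apply A (mat_apply B x)"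
    and sm: "summable (\<lambda>k. (A **\<^sub>m B) i k * x k)" if x: "x \<in> l2" for x i
  proof -
    show "summable (\<lambda>k. (A **\<^sub>m B) i k * x k)"
      unfolding mult_entry by (rule l2_prod_summable_c(2)[OF key_l2(1)[OF B bnd_row(1)[OF A]] x])
    show "mat_apply (A **\<^sub>m B) x = mat_apply A (mat_apply B x)"
      unfolding mat_apply_def[of A] mat_apply_def[of "A **\<^sub>m B"] mult_entry
      by (rule ext, rule key_eq[OF B bnd_row(1)[OF A] x, symmetric])
  qed
  show "\<And>x. x \<in> l2 \<Longrightarrow> mat_apply (A **\<^sub>m B) x = mat_apply A (mat_apply B x)" by (rule ap)
  show "bnd (A **\<^sub>m B) (CA * CB)"
    unfolding bnd_def
  proof (intro conjI ballI allI)
    fix x assume x: "x \<in> l2"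
    show "summable (\<lambda>j. (A **\<^sub>m B) i j * x j)" for i by (rule sm[OF x])
    have Bx: "mat_apply B x \<in> l2" by (rule bndD(2)[OF B x])
    show "mat_apply (A **\<^sub>m B) x \<in> l2" unfolding ap[OF x] by (rule bndD(2)[OF A Bx])
    have "l2norm (mat_apply A (mat_apply B x)) \<le> CA * l2norm (mat_apply B x)" by (rule bndD(3)[OF A Bx])
    also have "\<dots> \<le> CA * (CB * l2norm x)" by (intro mult_left_mono bndD(3)[OF B x] CA)
    finally show "l2norm (mat_apply (A **\<^sub>m B) x) \<le> CA * CB * l2norm x" unfolding ap[OF x] by simp
  qed (use CA CB in simp)
qed

lemma mat_eqI:
  assumes A: "bnd A CA" and B: "bnd B CB" and e: "\<And>x. x \<in> l2 \<Longrightarrow> mat_apply A x = mat_apply B x"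
  shows "A = B"
proof (rule ext, rule ext)
  fix i k
  have "mat_apply A (ev k) i = mat_apply B (ev k) i" using e[OF l2_ev] by simp
  then show "A i k = B i k" by (simp add: apply_ev)
qed

lemma mat_assoc:
  assumes A: "bnd A CA" and B: "bnd B CB" and C: "bnd C CC"
  shows "(A **\<^sub>m B) **\<^sub>m C = A **\<^sub>m (B **\<^sub>m C)"
  by (rule mat_eqI[OF bnd_mult(1)[OF bnd_mult(1)[OF A B] C] bnd_mult(1)[OF A bnd_mult(1)[OF B C]]])
     (simp add: bnd_mult(2)[OF bnd_mult(1)[OF A B] C] bnd_mult(2)[OF A bnd_mult(1)[OF B C]]
       bnd_mult(2)[OF A B] bnd_mult(2)[OF B C] bndD(2)[OF C])

lemma bnd_id: "bnd mat_id 1" and apply_id: "mat_apply mat_id x = x"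
proof -
  show ai: "mat_apply mat_id x = x" for x
    unfolding mat_apply_def mat_id_def
    by (rule ext, subst suminf_finite[of "{i}" for i]) auto
  show "bnd mat_id 1" unfolding bnd_def
  proof (intro conjI ballI allI)
    fix x :: "nat \<Rightarrow> complex" and i
    show "summable (\<lambda>j. mat_id i j * x j)" unfolding mat_id_def
      by (rule summable_finite[of "{i}"]) auto
  qed (auto simp: ai)
qed

lemma bnd_adj:
  assumes A: "bnd A C"
  shows "bnd (mat_adj A) C"
    "\<And>x y. x \<in> l2 \<Longrightarrow> y \<in> l2 \<Longrightarrow> ip (mat_apply A x) y = ip x (mat_apply (mat_adj A) y)"
proof -
  have C: "C \<ge> 0" using A by (simp add: bnd_def)
  have col: "summable (\<lambda>j. cnj (y j) * A j i)" if y: "y \<in> l2" for y i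
    by (rule l2_prod_summable_c(2)[OF l2_cnj[OF y] bnd_col(1)[OF A]])
  have rep: "mat_apply (mat_adj A) y = (\<lambda>i. cnj (\<Sum>j. cnj (y j) * A j i))" if y: "y \<in> l2" for y
    unfolding mat_apply_def mat_adj_def
    by (rule ext, subst suminf_cnj[OF col[OF y], symmetric]) (simp add: mult.commute)
  show "bnd (mat_adj A) C" unfolding bnd_def
  proof (intro conjI ballI allI)
    fix y assume y: "y \<in> l2"
    show "summable (\<lambda>j. mat_adj A i j * y j)" for i
      using col[OF y, of i] unfolding mat_adj_def
      by (subst summable_cnj_iff[symmetric]) (simp add: mult.commute)
    show "mat_apply (mat_adj A) y \<in> l2" unfolding rep[OF y]
      by (rule l2_cnj[OF key_l2(1)[OF A l2_cnj[OF y]]])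
    show "l2norm (mat_apply (mat_adj A) y) \<le> C * l2norm y" unfolding rep[OF y] l2norm_cnj
      using key_l2(2)[OF A l2_cnj[OF y]] by (simp add: l2norm_cnj)
  qed (rule C)
  fix x y assume x: "x \<in> l2" and y: "y \<in> l2"
  have "ip (mat_apply A x) y = (\<Sum>j. cnj (y j) * mat_apply A x j)"
    unfolding ip_def by (simp add: mult.commute)
  also have "\<dots> = (\<Sum>k. (\<Sum>j. cnj (y j) * A j k) * x k)"
    by (rule key_eq[OF A l2_cnj[OF y] x])
  also have "\<dots> = ip x (mat_apply (mat_adj A) y)"
    unfolding ip_def rep[OF y] by (simp add: mult.commute)
  finally show "ip (mat_apply A x) y = ip x (mat_apply (mat_adj A) y)" .
qed

lemma bnd_conj:
  assumes A: "bnd A C"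
  shows "bnd (mat_conj A) C"
proof -
  have C: "C \<ge> 0" using A by (simp add: bnd_def)
  have sm: "summable (\<lambda>j. A i j * cnj (x j))" if x: "x \<in> l2" for x i
    by (rule bndD(1)[OF A l2_cnj[OF x]])
  have rep: "mat_apply (mat_conj A) x = (\<lambda>i. cnj (mat_apply A (\<lambda>j. cnj (x j)) i))" if x: "x \<in> l2" for x
    unfolding mat_apply_def mat_conj_def
    by (rule ext, subst suminf_cnj[OF sm[OF x], symmetric]) simp
  show ?thesis unfolding bnd_def
  proof (intro conjI ballI allI)
    fix x assume x: "x \<in> l2"
    show "summable (\<lambda>j. mat_conj A i j * x j)" for i
      using sm[OF x, of i] unfolding mat_conj_def
      by (subst summable_cnj_iff[symmetric]) simp
    show "mat_apply (mat_conj A) x \<in> l2" unfolding rep[OF x]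
      by (rule l2_cnj[OF bndD(2)[OF A l2_cnj[OF x]]])
    show "l2norm (mat_apply (mat_conj A) x) \<le> C * l2norm x" unfolding rep[OF x] l2norm_cnj
      using bndD(3)[OF A l2_cnj[OF x]] by (simp add: l2norm_cnj)
  qed (rule C)
qed

lemma transpose_eq: "mat_transpose A = mat_adj (mat_conj A)"
  by (simp add: mat_transpose_def mat_adj_def mat_conj_def)

lemma bnd_transpose: "bnd A C \<Longrightarrow> bnd (mat_transpose A) C"
  unfolding transpose_eq by (intro bnd_adj(1) bnd_conj)

lemma adj_adj[simp]: "mat_adj (mat_adj A) = A"
  by (simp add: mat_adj_def)

lemma bnd_add:
  assumes A: "bnd A CA" and B: "bnd B CB"
  shows "bnd (mat_add A B) (CA + CB)"
    "\<And>x. x \<in> l2 \<Longrightarrow> mat_apply (mat_add A B) x = (\<lambda>i. mat_apply A x i + mat_apply B x i)"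
proof -
  have ap: "mat_apply (mat_add A B) x = (\<lambda>i. mat_apply A x i + mat_apply B x i)" if x: "x \<in> l2" for x
    unfolding mat_apply_def mat_add_def
    by (rule ext, simp add: distrib_right suminf_add[OF bndD(1)[OF A x] bndD(1)[OF B x]])
  show "\<And>x. x \<in> l2 \<Longrightarrow> mat_apply (mat_add A B) x = (\<lambda>i. mat_apply A x i + mat_apply B x i)" by (rule ap)
  show "bnd (mat_add A B) (CA + CB)" unfolding bnd_def
  proof (intro conjI ballI allI)
    fix x assume x: "x \<in> l2"
    show "summable (\<lambda>j. mat_add A B i j * x j)" for i
      unfolding mat_add_def distrib_right by (intro summable_add bndD(1)[OF A x] bndD(1)[OF B x])
    show "mat_apply (mat_add A B) x \<in> l2" unfolding ap[OF x]
      by (intro l2_add bndD(2)[OF A x] bndD(2)[OF B x])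
    have "l2norm (mat_apply (mat_add A B) x) \<le> l2norm (mat_apply A x) + l2norm (mat_apply B x)"
      unfolding ap[OF x] by (intro l2norm_triangle bndD(2)[OF A x] bndD(2)[OF B x])
    also have "\<dots> \<le> CA * l2norm x + CB * l2norm x" by (intro add_mono bndD(3)[OF A x] bndD(3)[OF B x])
    finally show "l2norm (mat_apply (mat_add A B) x) \<le> (CA + CB) * l2norm x" by (simp add: algebra_simps)
  qed (use A B in \<open>auto simp: bnd_def\<close>)
qed

lemma bnd_scale:
  assumes A: "bnd A CA"
  shows "bnd (mat_scale c A) (cmod c * CA)"
    "\<And>x. x \<in> l2 \<Longrightarrow> mat_apply (mat_scale c A) x = (\<lambda>i. c * mat_apply A x i)"
proof -
  have ap: "mat_apply (mat_scale c A) x = (\<lambda>i. c * mat_apply A x i)" if x: "x \<in> l2" for x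
    unfolding mat_apply_def mat_scale_def
    by (rule ext, simp add: mult.assoc suminf_mult[OF bndD(1)[OF A x]])
  show "\<And>x. x \<in> l2 \<Longrightarrow> mat_apply (mat_scale c A) x = (\<lambda>i. c * mat_apply A x i)" by (rule ap)
  show "bnd (mat_scale c A) (cmod c * CA)" unfolding bnd_def
  proof (intro conjI ballI allI)
    fix x assume x: "x \<in> l2"
    show "summable (\<lambda>j. mat_scale c A i j * x j)" for i
      unfolding mat_scale_def mult.assoc by (intro summable_mult bndD(1)[OF A x])
    show "mat_apply (mat_scale c A) x \<in> l2" unfolding ap[OF x]
      by (intro l2_scale bndD(2)[OF A x])
    show "l2norm (mat_apply (mat_scale c A) x) \<le> (cmod c * CA) * l2norm x"
      unfolding ap[OF x] l2norm_scale[OF bndD(2)[OF A x]] mult.assoc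
      by (intro mult_left_mono bndD(3)[OF A x]) auto
  qed (use A in \<open>auto simp: bnd_def\<close>)
qed

lemma diff_eq: "mat_diff A B = mat_add A (mat_scale (-1) B)"
  by (simp add: mat_diff_def mat_add_def mat_scale_def fun_eq_iff)

lemma bnd_diff:
  assumes A: "bnd A CA" and B: "bnd B CB"
  shows "bnd (mat_diff A B) (CA + CB)"
    "\<And>x. x \<in> l2 \<Longrightarrow> mat_apply (mat_diff A B) x = (\<lambda>i. mat_apply A x i - mat_apply B x i)"
  using bnd_add[OF A bnd_scale(1)[OF B, of "-1"]] bnd_scale(2)[OF B, of _ "-1"]
  unfolding diff_eq by auto

lemma infsum_suminf_nat:
  fixes f :: "nat \<Rightarrow> 'a::banach"
  assumes "summable (\<lambda>n. norm (f n))"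
  shows "infsum f UNIV = suminf f"
  by (rule infsumI[OF norm_summable_imp_has_sum[OF assms summable_sums[OF summable_norm_cancel[OF assms]]]])

lemma swap_sum:
  fixes w :: "nat \<Rightarrow> nat \<Rightarrow> complex"
  assumes r: "\<And>n. summable (\<lambda>j. norm (w n j))" and s: "summable (\<lambda>n. \<Sum>j. norm (w n j))"
  shows "summable (\<lambda>n. norm (w n j))" "summable (\<lambda>j. norm (\<Sum>n. w n j))"
    "summable (\<lambda>j. \<Sum>n. w n j)"
    "(\<Sum>j. \<Sum>n. w n j) = (\<Sum>n. \<Sum>j. w n j)"
proof -
  let ?f = "\<lambda>(n, j). w n j"
  have inn: "infsum (\<lambda>j. norm (w n j)) UNIV = (\<Sum>j. norm (w n j))" for n
    by (rule infsum_suminf_nat) (simp add: r)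
  have ab: "(\<lambda>p. norm (?f p)) summable_on (Sigma UNIV (\<lambda>_. UNIV))"
  proof (subst abs_summable_on_Sigma_iff, intro conjI ballI)
    show "(\<lambda>j. norm (?f (n, j))) summable_on UNIV" for n
      using norm_summable_imp_summable_on[of "\<lambda>j. norm (w n j)"] r by simp
    show "(\<lambda>n. norm (\<Sum>\<^sub>\<infinity>j\<in>UNIV. norm (?f (n, j)))) summable_on UNIV"
      unfolding case_prod_conv inn
      using norm_summable_imp_summable_on[of "\<lambda>n. norm (\<Sum>j. norm (w n j))"] s
      by (simp add: suminf_nonneg r)
  qed
  then have ab': "(\<lambda>p. norm ((\<lambda>(j, n). w n j) p)) summable_on (Sigma UNIV (\<lambda>_. UNIV))"
    using summable_on_swap[of "\<lambda>p. norm (?f p)" UNIV UNIV] by (simp add: case_prod_unfold)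
  have col: "(\<lambda>n. norm (w n j)) summable_on UNIV" for j
    using ab' by (subst (asm) abs_summable_on_Sigma_iff) auto
  show c1: "summable (\<lambda>n. norm (w n j))" for j
    using summable_on_imp_summable[OF col[of j]] .
  have inn2: "infsum (\<lambda>n. norm (w n j)) UNIV = (\<Sum>n. norm (w n j))" for j
    by (rule infsum_suminf_nat) (simp add: c1)
  have "(\<lambda>j. norm (infsum (\<lambda>n. norm (w n j)) UNIV)) summable_on UNIV"
    using ab' by (subst (asm) abs_summable_on_Sigma_iff) (auto simp: case_prod_unfold)
  then have "summable (\<lambda>j. norm (\<Sum>n. norm (w n j)))"
    unfolding inn2 by (rule summable_on_imp_summable)
  then have s2: "summable (\<lambda>j. \<Sum>n. norm (w n j))"
    by (simp add: suminf_nonneg c1)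
  show s3: "summable (\<lambda>j. norm (\<Sum>n. w n j))"
    by (rule summable_comparison_test'[OF s2]) (simp add: summable_norm c1)
  show "summable (\<lambda>j. \<Sum>n. w n j)" by (rule summable_norm_cancel[OF s3])
  have "?f summable_on (UNIV \<times> UNIV)"
    using abs_summable_summable[OF ab] by simp
  then have "infsum (\<lambda>n. infsum (\<lambda>j. w n j) UNIV) UNIV = infsum (\<lambda>j. infsum (\<lambda>n. w n j) UNIV) UNIV"
    by (rule infsum_swap_banach)
  moreover have "infsum (\<lambda>j. w n j) UNIV = (\<Sum>j. w n j)" for n
    by (rule infsum_suminf_nat) (simp add: r)
  moreover have "infsum (\<lambda>n. w n j) UNIV = (\<Sum>n. w n j)" for j
    by (rule infsum_suminf_nat) (simp add: c1)
  moreover have "infsum (\<lambda>j. \<Sum>n. w n j) UNIV = (\<Sum>j. \<Sum>n. w n j)"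
    by (rule infsum_suminf_nat[OF s3])
  moreover have "infsum (\<lambda>n. \<Sum>j. w n j) UNIV = (\<Sum>n. \<Sum>j. w n j)"
  proof (rule infsum_suminf_nat)
    show "summable (\<lambda>n. norm (\<Sum>j. w n j))"
      by (rule summable_comparison_test'[OF s]) (simp add: summable_norm r)
  qed
  ultimately show "(\<Sum>j. \<Sum>n. w n j) = (\<Sum>n. \<Sum>j. w n j)" by simp
qed

primrec mp :: "cmat \<Rightarrow> nat \<Rightarrow> cmat" where
  "mp T 0 = mat_id"
| "mp T (Suc n) = T **\<^sub>m mp T n"

lemma mp_bnd:
  assumes T: "bnd T q"
  shows "bnd (mp T n) (q ^ n)" "\<And>x. x \<in> l2 \<Longrightarrow> mat_apply (mp T n) x = (mat_apply T ^^ n) x"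
proof -
  have "bnd (mp T n) (q ^ n) \<and> (\<forall>x\<in>l2. mat_apply (mp T n) x = (mat_apply T ^^ n) x)"
  proof (induction n)
    case 0 then show ?case by (simp add: bnd_id apply_id)
  next
    case (Suc n)
    then have b: "bnd (mp T n) (q ^ n)" and e: "\<forall>x\<in>l2. mat_apply (mp T n) x = (mat_apply T ^^ n) x" by auto
    show ?case using bnd_mult[OF T b] e by simp
  qed
  then show "bnd (mp T n) (q ^ n)" "\<And>x. x \<in> l2 \<Longrightarrow> mat_apply (mp T n) x = (mat_apply T ^^ n) x" by auto
qed

lemma neumann:
  assumes T: "bnd T q" and q1: "q < 1"
  shows "has_bounded_inverse (mat_diff mat_id T)"
proof -
  have q0: "q \<ge> 0" using T by (simp add: bnd_def)
  define f where "f = mat_apply T"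
  define R where "R = (\<lambda>i j. \<Sum>n. mp T n i j)"
  have geo: "summable (\<lambda>n. q ^ n)" using q0 q1 by (intro summable_geometric) simp
  have v_l2: "(f ^^ n) x \<in> l2" and v_n: "l2norm ((f ^^ n) x) \<le> q ^ n * l2norm x" if x: "x \<in> l2" for x n
    using bndD(2,3)[OF mp_bnd(1)[OF T, of n] x] mp_bnd(2)[OF T x, of n] unfolding f_def by auto
  have v_coord: "cmod ((f ^^ n) x i) \<le> q ^ n * l2norm x" if x: "x \<in> l2" for x n i
    using coord_le[OF v_l2[OF x]] v_n[OF x] by (rule order_trans)
  have v_summ: "summable (\<lambda>n. (f ^^ n) x i)" if x: "x \<in> l2" for x i
    by (rule summable_comparison_test'[OF summable_mult2[OF geo, of "l2norm x"] v_coord[OF x]])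
  have Ract: "summable (\<lambda>j. R i j * x j) \<and> (\<Sum>j. R i j * x j) = (\<Sum>n. (f ^^ n) x i)" if x: "x \<in> l2" for x i
  proof -
    define w where "w = (\<lambda>n j. mp T n i j * x j)"
    have row: "(\<lambda>j. mp T n i j) \<in> l2" "l2norm (\<lambda>j. mp T n i j) \<le> q ^ n" for n
      using bnd_row[OF mp_bnd(1)[OF T]] by auto
    have r: "summable (\<lambda>j. norm (w n j))" for n
      unfolding w_def using l2_prod_summable_c(1)[OF row(1) x] by simp
    have rb: "(\<Sum>j. norm (w n j)) \<le> q ^ n * l2norm x" for n
    proof -
      have "(\<Sum>j. norm (w n j)) \<le> l2norm (\<lambda>j. mp T n i j) * l2norm x"
        unfolding w_def norm_mult using l2_CS_abs[OF row(1) x] by simp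
      also have "\<dots> \<le> q ^ n * l2norm x" by (intro mult_right_mono row(2) l2norm_nonneg x)
      finally show ?thesis .
    qed
    have s: "summable (\<lambda>n. \<Sum>j. norm (w n j))"
      by (rule summable_comparison_test'[OF summable_mult2[OF geo, of "l2norm x"]])
         (use rb in \<open>simp add: suminf_nonneg r\<close>)
    note sw = swap_sum[OF r s]
    have ent: "summable (\<lambda>n. mp T n i j)" for j
    proof (rule summable_comparison_test'[OF geo])
      fix n show "norm (mp T n i j) \<le> q ^ n"
        using coord_le[OF row(1), of n j] row(2)[of n] by simp
    qed
    have e1: "R i j * x j = (\<Sum>n. w n j)" for j
      unfolding R_def w_def by (rule suminf_mult2[OF ent])
    have "summable (\<lambda>j. R i j * x j)" unfolding e1 by (rule sw(3))
    moreover have "(\<Sum>j. R i j * x j) = (\<Sum>n. (f ^^ n) x i)"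
    proof -
      have "(\<Sum>j. R i j * x j) = (\<Sum>n. \<Sum>j. w n j)" unfolding e1 by (rule sw(4))
      also have "\<dots> = (\<Sum>n. (f ^^ n) x i)"
      proof (rule suminf_cong)
        fix n
        have "(\<lambda>i. \<Sum>j. mp T n i j * x j) = (mat_apply T ^^ n) x"
          using mp_bnd(2)[OF T x, of n] by (simp add: mat_apply_def)
        then show "(\<Sum>j. w n j) = (f ^^ n) x i" unfolding w_def f_def by (metis)
      qed
      finally show ?thesis .
    qed
    ultimately show ?thesis by blast
  qed
  have Rap: "mat_apply R x = (\<lambda>i. \<Sum>n. (f ^^ n) x i)" if x: "x \<in> l2" for x
    unfolding mat_apply_def using Ract[OF x] by simp
  have psum_l2: "(\<lambda>i. \<Sum>n<N. (f ^^ n) x i) \<in> l2 \<and> l2norm (\<lambda>i. \<Sum>n<N. (f ^^ n) x i) \<le> (\<Sum>n<N. q ^ n) * l2norm x"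
    if x: "x \<in> l2" for x N
  proof (induction N)
    case 0 then show ?case by (simp add: l2_zero l2norm_zero)
  next
    case (Suc N)
    have e: "(\<lambda>i. \<Sum>n<Suc N. (f ^^ n) x i) = (\<lambda>i. (\<Sum>n<N. (f ^^ n) x i) + (f ^^ N) x i)" by simp
    show ?case unfolding e
    proof
      show "(\<lambda>i. (\<Sum>n<N. (f ^^ n) x i) + (f ^^ N) x i) \<in> l2"
        using Suc.IH v_l2[OF x] by (intro l2_add) auto
      have "l2norm (\<lambda>i. (\<Sum>n<N. (f ^^ n) x i) + (f ^^ N) x i)
          \<le> l2norm (\<lambda>i. \<Sum>n<N. (f ^^ n) x i) + l2norm ((f ^^ N) x)"
        using Suc.IH v_l2[OF x] by (intro l2norm_triangle) auto
      also have "\<dots> \<le> (\<Sum>n<N. q ^ n) * l2norm x + q ^ N * l2norm x"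
        using Suc.IH v_n[OF x] by (intro add_mono) auto
      finally show "l2norm (\<lambda>i. (\<Sum>n<N. (f ^^ n) x i) + (f ^^ N) x i) \<le> (\<Sum>n<Suc N. q ^ n) * l2norm x"
        by (simp add: algebra_simps)
    qed
  qed
  have gsum: "(\<Sum>n<N. q ^ n) \<le> 1 / (1 - q)" for N
  proof -
    have "(\<Sum>n<N. q ^ n) \<le> (\<Sum>n. q ^ n)" by (rule sum_le_suminf[OF geo]) (use q0 in auto)
    then show ?thesis using suminf_geometric[of q] q0 q1 by simp
  qed
  have Rbnd: "mat_apply R x \<in> l2 \<and> l2norm (mat_apply R x) \<le> 1 / (1 - q) * l2norm x" if x: "x \<in> l2" for x
  proof -
    let ?K = "1 / (1 - q) * l2norm x"
    have K0: "?K \<ge> 0" using q1 l2norm_nonneg[OF x] by simp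
    have "(\<Sum>i<M. (cmod (mat_apply R x i))^2) \<le> ?K^2" for M
    proof -
      have lim: "(\<lambda>N. (\<Sum>i<M. (cmod (\<Sum>n<N. (f ^^ n) x i))^2)) \<longlonglongrightarrow> (\<Sum>i<M. (cmod (mat_apply R x i))^2)"
        unfolding Rap[OF x]
        by (intro tendsto_sum tendsto_power tendsto_norm summable_LIMSEQ v_summ[OF x])
      have "(\<Sum>i<M. (cmod (\<Sum>n<N. (f ^^ n) x i))^2) \<le> ?K^2" for N
      proof -
        have pl: "(\<lambda>i. \<Sum>n<N. (f ^^ n) x i) \<in> l2" using psum_l2[OF x] by blast
        have "(\<Sum>i<M. (cmod (\<Sum>n<N. (f ^^ n) x i))^2) \<le> (\<Sum>i. (cmod (\<Sum>n<N. (f ^^ n) x i))^2)"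
          by (rule sum_le_suminf) (use pl in \<open>auto simp: l2_iff\<close>)
        also have "\<dots> = (l2norm (\<lambda>i. \<Sum>n<N. (f ^^ n) x i))^2" by (rule l2norm_sq[OF pl, symmetric])
        also have "\<dots> \<le> ?K^2"
        proof (rule power_mono)
          have "l2norm (\<lambda>i. \<Sum>n<N. (f ^^ n) x i) \<le> (\<Sum>n<N. q ^ n) * l2norm x" using psum_l2[OF x] by blast
          also have "\<dots> \<le> ?K" by (intro mult_right_mono gsum l2norm_nonneg x)
          finally show "l2norm (\<lambda>i. \<Sum>n<N. (f ^^ n) x i) \<le> ?K" .
        qed (rule l2norm_nonneg[OF pl])
        finally show ?thesis .
      qed
      then show ?thesis using lim by (intro LIMSEQ_le_const2[OF lim]) auto
    qed
    then show ?thesis using l2_from_partial[OF K0] by blast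
  qed
  have bR: "bnd R (1 / (1 - q))" unfolding bnd_def
  proof (intro conjI ballI allI)
    fix x assume x: "x \<in> l2"
    show "summable (\<lambda>j. R i j * x j)" for i using Ract[OF x] by blast
  qed (use Rbnd q1 in auto)
  have bT: "bnd T q" by (rule T)
  note bD = bnd_diff[OF bnd_id bT]
  have TR: "mat_apply T (mat_apply R x) i = (\<Sum>n. (f ^^ Suc n) x i)" if x: "x \<in> l2" for x i
  proof -
    define w where "w = (\<lambda>n j. T i j * (f ^^ n) x j)"
    have row: "(\<lambda>j. T i j) \<in> l2" "l2norm (\<lambda>j. T i j) \<le> q" using bnd_row[OF T] by auto
    have r: "summable (\<lambda>j. norm (w n j))" for n
      unfolding w_def using l2_prod_summable_c(1)[OF row(1) v_l2[OF x]] by simp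
    have rb: "(\<Sum>j. norm (w n j)) \<le> q * (q ^ n * l2norm x)" for n
    proof -
      have "(\<Sum>j. norm (w n j)) \<le> l2norm (\<lambda>j. T i j) * l2norm ((f ^^ n) x)"
        unfolding w_def norm_mult using l2_CS_abs[OF row(1) v_l2[OF x]] by simp
      also have "\<dots> \<le> q * (q ^ n * l2norm x)"
        by (intro mult_mono row(2) v_n[OF x] q0 l2norm_nonneg v_l2[OF x])
      finally show ?thesis .
    qed
    have s: "summable (\<lambda>n. \<Sum>j. norm (w n j))"
      by (rule summable_comparison_test'[OF summable_mult[OF summable_mult2[OF geo, of "l2norm x"], of q]])
         (use rb in \<open>simp add: suminf_nonneg r\<close>)
    note sw = swap_sum[OF r s]
    have e1: "T i j * mat_apply R x j = (\<Sum>n. w n j)" for j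
      unfolding Rap[OF x] w_def by (rule suminf_mult[OF v_summ[OF x], symmetric])
    have "mat_apply T (mat_apply R x) i = (\<Sum>j. \<Sum>n. w n j)"
      unfolding mat_apply_def[of T] e1 ..
    also have "\<dots> = (\<Sum>n. \<Sum>j. w n j)" by (rule sw(4))
    also have "\<dots> = (\<Sum>n. (f ^^ Suc n) x i)"
      unfolding w_def f_def by (simp add: mat_apply_def)
    finally show ?thesis .
  qed
  have DR: "mat_diff mat_id T **\<^sub>m R = mat_id"
  proof (rule mat_eqI[OF bnd_mult(1)[OF bD(1) bR] bnd_id])
    fix x assume x: "x \<in> l2"
    have Rx: "mat_apply R x \<in> l2" by (rule bndD(2)[OF bR x])
    show "mat_apply (mat_diff mat_id T **\<^sub>m R) x = mat_apply mat_id x"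
      unfolding bnd_mult(2)[OF bD(1) bR x] bD(2)[OF Rx] apply_id
    proof (rule ext)
      fix i
      have "mat_apply R x i = (\<Sum>n. (f ^^ n) x i)" by (simp add: Rap[OF x])
      also have "\<dots> = (\<Sum>n. (f ^^ Suc n) x i) + (f ^^ 0) x i"
        using suminf_split_head[OF v_summ[OF x, of i]] by simp
      finally show "mat_apply R x i - mat_apply T (mat_apply R x) i = x i"
        using TR[OF x, of i] by simp
    qed
  qed
  have RD: "R **\<^sub>m mat_diff mat_id T = mat_id"
  proof (rule mat_eqI[OF bnd_mult(1)[OF bR bD(1)] bnd_id])
    fix x assume x: "x \<in> l2"
    have fx: "f x \<in> l2" unfolding f_def by (rule bndD(2)[OF T x])
    have Dx: "mat_apply (mat_diff mat_id T) x = (\<lambda>i. x i - f x i)"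
      unfolding bD(2)[OF x] apply_id f_def ..
    have dl2: "(\<lambda>i. x i - f x i) \<in> l2" by (rule l2_diff[OF x fx])
    have lin: "(f ^^ n) (\<lambda>i. x i - f x i) = (\<lambda>i. (f ^^ n) x i - (f ^^ Suc n) x i)" for n
    proof -
      have "(f ^^ n) (\<lambda>i. x i - f x i) = mat_apply (mp T n) (\<lambda>i. x i - f x i)"
        using mp_bnd(2)[OF T dl2] unfolding f_def by simp
      also have "\<dots> = (\<lambda>i. mat_apply (mp T n) x i - mat_apply (mp T n) (f x) i)"
        by (rule apply_diff[OF mp_bnd(1)[OF T] x fx])
      also have "\<dots> = (\<lambda>i. (f ^^ n) x i - (f ^^ Suc n) x i)"
        using mp_bnd(2)[OF T x, of n] mp_bnd(2)[OF T fx, of n] unfolding f_def funpow_Suc_right by simp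
      finally show ?thesis .
    qed
    show "mat_apply (R **\<^sub>m mat_diff mat_id T) x = mat_apply mat_id x"
      unfolding bnd_mult(2)[OF bR bD(1) x] Dx Rap[OF dl2] apply_id lin
    proof (rule ext)
      fix i
      have "(\<lambda>n. (f ^^ n) x i) \<longlonglongrightarrow> 0"
      proof (rule Lim_null_comparison[OF always_eventually[OF allI[OF v_coord[OF x]]]])
        show "(\<lambda>n. q ^ n * l2norm x) \<longlonglongrightarrow> 0"
          using LIMSEQ_power_zero[of q] q0 q1 tendsto_mult_left_zero by auto
      qed
      from telescope_sums'[OF this]
      show "(\<Sum>n. (f ^^ n) x i - (f ^^ Suc n) x i) = x i" by (simp add: sums_iff)
    qed
  qed
  show ?thesis unfolding has_bounded_inverse_def
    using DR RD bR bounded_mat_bnd by blast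
qed

declare apply_id[simp]

lemma bm_apply_l2[simp]: "bounded_mat A \<Longrightarrow> x \<in> l2 \<Longrightarrow> mat_apply A x \<in> l2"
  using bndD(2) bounded_mat_bnd by blast

lemma bm_mult[simp]: "bounded_mat A \<Longrightarrow> bounded_mat B \<Longrightarrow> bounded_mat (A **\<^sub>m B)"
  using bnd_mult(1) bounded_mat_bnd by blast

lemma bm_adj[simp]: "bounded_mat A \<Longrightarrow> bounded_mat (mat_adj A)"
  using bnd_adj(1) bounded_mat_bnd by blast

lemma bm_transpose[simp]: "bounded_mat A \<Longrightarrow> bounded_mat (mat_transpose A)"
  using bnd_transpose bounded_mat_bnd by blast

lemma bm_conj[simp]: "bounded_mat A \<Longrightarrow> bounded_mat (mat_conj A)"
  using bnd_conj bounded_mat_bnd by blast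

lemma bm_id[simp]: "bounded_mat mat_id"
  using bnd_id bounded_mat_bnd by blast

lemma bm_add[simp]: "bounded_mat A \<Longrightarrow> bounded_mat B \<Longrightarrow> bounded_mat (mat_add A B)"
  using bnd_add(1) bounded_mat_bnd by blast

lemma bm_diff[simp]: "bounded_mat A \<Longrightarrow> bounded_mat B \<Longrightarrow> bounded_mat (mat_diff A B)"
  using bnd_diff(1) bounded_mat_bnd by blast

lemma bm_scale[simp]: "bounded_mat A \<Longrightarrow> bounded_mat (mat_scale c A)"
  using bnd_scale(1) bounded_mat_bnd by blast

lemma act_mult[simp]: "bounded_mat A \<Longrightarrow> bounded_mat B \<Longrightarrow> x \<in> l2 \<Longrightarrow>
    mat_apply (A **\<^sub>m B) x = mat_apply A (mat_apply B x)"
  using bnd_mult(2) bounded_mat_bnd by blast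

lemma act_add[simp]: "bounded_mat A \<Longrightarrow> bounded_mat B \<Longrightarrow> x \<in> l2 \<Longrightarrow>
    mat_apply (mat_add A B) x = (\<lambda>i. mat_apply A x i + mat_apply B x i)"
  using bnd_add(2) bounded_mat_bnd by blast

lemma act_diff[simp]: "bounded_mat A \<Longrightarrow> bounded_mat B \<Longrightarrow> x \<in> l2 \<Longrightarrow>
    mat_apply (mat_diff A B) x = (\<lambda>i. mat_apply A x i - mat_apply B x i)"
  using bnd_diff(2) bounded_mat_bnd by blast

lemma act_scale[simp]: "bounded_mat A \<Longrightarrow> x \<in> l2 \<Longrightarrow>
    mat_apply (mat_scale c A) x = (\<lambda>i. c * mat_apply A x i)"
  using bnd_scale(2) bounded_mat_bnd by blast

lemma act_lin_add[simp]: "bounded_mat A \<Longrightarrow> x \<in> l2 \<Longrightarrow> y \<in> l2 \<Longrightarrow>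
    mat_apply A (\<lambda>n. x n + y n) = (\<lambda>i. mat_apply A x i + mat_apply A y i)"
  using apply_add bounded_mat_bnd by blast

lemma act_lin_diff[simp]: "bounded_mat A \<Longrightarrow> x \<in> l2 \<Longrightarrow> y \<in> l2 \<Longrightarrow>
    mat_apply A (\<lambda>n. x n - y n) = (\<lambda>i. mat_apply A x i - mat_apply A y i)"
  using apply_diff bounded_mat_bnd by blast

lemma act_lin_scale[simp]: "bounded_mat A \<Longrightarrow> x \<in> l2 \<Longrightarrow>
    mat_apply A (\<lambda>n. c * x n) = (\<lambda>i. c * mat_apply A x i)"
  using apply_scale bounded_mat_bnd by blast

lemma mat_eqI': "bounded_mat A \<Longrightarrow> bounded_mat B \<Longrightarrow> (\<And>x. x \<in> l2 \<Longrightarrow> mat_apply A x = mat_apply B x) \<Longrightarrow> A = B"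
  using mat_eqI bounded_mat_bnd by metis

lemma swap_inv:
  assumes A: "bounded_mat A" and B: "bounded_mat B"
    and inv: "has_bounded_inverse (mat_diff mat_id (mat_scale e (B **\<^sub>m A)))"
  shows "has_bounded_inverse (mat_diff mat_id (mat_scale e (A **\<^sub>m B)))"
proof -
  let ?M = "mat_diff mat_id (mat_scale e (B **\<^sub>m A))"
  obtain K where K: "bounded_mat K" and MK: "?M **\<^sub>m K = mat_id" and KM: "K **\<^sub>m ?M = mat_id"
    using inv unfolding has_bounded_inverse_def by blast
  have mk: "(\<lambda>i. mat_apply K z i - e * mat_apply B (mat_apply A (mat_apply K z)) i) = z" if z: "z \<in> l2" for z
  proof -
    have "mat_apply (?M **\<^sub>m K) z = z" unfolding MK by (simp add: apply_id)
    then show ?thesis using A B K z by (simp add: apply_id)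
  qed
  have km: "mat_apply K (\<lambda>i. z i - e * mat_apply B (mat_apply A z) i) = z" if z: "z \<in> l2" for z
  proof -
    have "mat_apply (K **\<^sub>m ?M) z = z" unfolding KM by (simp add: apply_id)
    then show ?thesis using A B K z by (simp add: apply_id)
  qed
  let ?N = "mat_add mat_id (mat_scale e ((A **\<^sub>m K) **\<^sub>m B))"
  let ?L = "mat_diff mat_id (mat_scale e (A **\<^sub>m B))"
  have "?L **\<^sub>m ?N = mat_id"
  proof (rule mat_eqI')
    fix x assume x: "x \<in> l2"
    let ?z = "mat_apply B x"
    let ?u = "mat_apply K ?z"
    have z: "?z \<in> l2" and u: "?u \<in> l2" using x A B K by auto
    have "mat_apply B (\<lambda>i. x i + e * mat_apply A ?u i) = (\<lambda>i. ?z i + e * mat_apply B (mat_apply A ?u) i)"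
      using A B K x by (simp add: l2_scale)
    also have "\<dots> = ?u"
    proof -
      have "(\<lambda>i. ?u i - e * mat_apply B (mat_apply A ?u) i) = ?z" by (rule mk[OF z])
      then show ?thesis by (auto simp: fun_eq_iff algebra_simps dest: fun_cong)
    qed
    finally have BN: "mat_apply B (\<lambda>i. x i + e * mat_apply A ?u i) = ?u" .
    have Au: "mat_apply A ?u = (\<lambda>i. mat_apply A ?z i + e * mat_apply A (mat_apply B (mat_apply A ?u)) i)"
    proof -
      have ueq: "?u = (\<lambda>i. ?z i + e * mat_apply B (mat_apply A ?u) i)"
        using mk[OF z] by (auto simp: fun_eq_iff algebra_simps dest: fun_cong)
      have "mat_apply A ?u = mat_apply A (\<lambda>i. ?z i + e * mat_apply B (mat_apply A ?u) i)"
        by (rule arg_cong[OF ueq])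
      then show ?thesis using A B K x by (simp add: l2_scale)
    qed
    have "mat_apply (?L **\<^sub>m ?N) x = (\<lambda>i. x i - e * mat_apply A ?z i + e * (mat_apply A ?u i
         - e * mat_apply A (mat_apply B (mat_apply A ?u)) i))"
      using A B K x by (simp add: l2_add l2_scale)
    also have "\<dots> = x"
    proof (rule ext)
      fix i
      have h: "mat_apply A ?u i = mat_apply A ?z i + e * mat_apply A (mat_apply B (mat_apply A ?u)) i"
        using fun_cong[OF Au, of i] by simp
      show "x i - e * mat_apply A ?z i + e * (mat_apply A ?u i
         - e * mat_apply A (mat_apply B (mat_apply A ?u)) i) = x i"
        unfolding h by (simp add: algebra_simps)
    qed
    finally show "mat_apply (?L **\<^sub>m ?N) x = mat_apply mat_id x" by (simp add: apply_id)
  qed (use A B K in auto)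
  moreover have "?N **\<^sub>m ?L = mat_id"
  proof (rule mat_eqI')
    fix x assume x: "x \<in> l2"
    let ?z = "mat_apply B x"
    have z: "?z \<in> l2" using x B by auto
    have "mat_apply B (\<lambda>i. x i - e * mat_apply A ?z i) = (\<lambda>i. ?z i - e * mat_apply B (mat_apply A ?z) i)"
      using A B x by (simp add: l2_scale)
    then have KB: "mat_apply K (mat_apply B (\<lambda>i. x i - e * mat_apply A ?z i)) = ?z"
      using km[OF z] by simp
    have KB1: "(\<lambda>i. mat_apply K ?z i - e * mat_apply K (mat_apply B (mat_apply A ?z)) i) = ?z"
      using KB A B K x by (simp add: l2_scale)
    have KB2: "mat_apply A (\<lambda>i. mat_apply K ?z i - e * mat_apply K (mat_apply B (mat_apply A ?z)) i) = mat_apply A ?z"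
      by (rule arg_cong[OF KB1])
    then have KB3: "(\<lambda>i. mat_apply A (mat_apply K ?z) i - e * mat_apply A (mat_apply K (mat_apply B (mat_apply A ?z))) i) = mat_apply A ?z"
      using A B K x by (simp add: l2_scale)
    have "mat_apply (?N **\<^sub>m ?L) x = (\<lambda>i. x i + e * mat_apply A (mat_apply K ?z) i -
             e * (mat_apply A ?z i + e * mat_apply A (mat_apply K (mat_apply B (mat_apply A ?z))) i))"
      using A B K x by (simp add: l2_diff l2_scale)
    also have "\<dots> = x"
    proof (rule ext)
      fix i
      have h: "mat_apply A (mat_apply K ?z) i = mat_apply A ?z i + e * mat_apply A (mat_apply K (mat_apply B (mat_apply A ?z))) i"
        using fun_cong[OF KB3, of i] by (simp add: algebra_simps)
      show "x i + e * mat_apply A (mat_apply K ?z) i -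
             e * (mat_apply A ?z i + e * mat_apply A (mat_apply K (mat_apply B (mat_apply A ?z))) i) = x i"
        unfolding h by (simp add: algebra_simps)
    qed
    finally show "mat_apply (?N **\<^sub>m ?L) x = mat_apply mat_id x" by simp
  qed (use A B K in auto)
  moreover have "bounded_mat ?N" using A B K by simp
  ultimately show ?thesis unfolding has_bounded_inverse_def by blast
qed

lemma ip_scale:
  assumes x: "x \<in> l2" and y: "y \<in> l2"
  shows "ip (\<lambda>n. a * x n) (\<lambda>n. b * y n) = a * cnj b * ip x y"
proof -
  have "ip (\<lambda>n. a * x n) (\<lambda>n. b * y n) = (\<Sum>n. (a * cnj b) * (x n * cnj (y n)))"
    unfolding ip_def by (simp add: algebra_simps)
  also have "\<dots> = (a * cnj b) * ip x y" unfolding ip_def by (rule suminf_mult[OF ip_summable[OF x y]])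
  finally show ?thesis .
qed

lemma ip_add2:
  assumes x: "x \<in> l2" and y: "y \<in> l2" and z: "z \<in> l2"
  shows "ip x (\<lambda>n. y n + z n) = ip x y + ip x z"
  unfolding ip_def by (simp add: distrib_left suminf_add[OF ip_summable[OF x y] ip_summable[OF x z]])

lemma bnd_from:
  assumes A: "bounded_mat A" and q: "q \<ge> 0" and e: "\<And>x. x \<in> l2 \<Longrightarrow> l2norm (mat_apply A x) \<le> q * l2norm x"
  shows "bnd A q"
proof -
  obtain C where C: "bnd A C" using A bounded_mat_bnd by blast
  show ?thesis unfolding bnd_def using bndD[OF C] e q by auto
qed

lemma adj_mult:
  assumes A: "bounded_mat A" and B: "bounded_mat B"
  shows "mat_adj (A **\<^sub>m B) = mat_adj B **\<^sub>m mat_adj A"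
proof (rule ext, rule ext)
  fix i k
  obtain CA CB where bA: "bnd A CA" and bB: "bnd B CB" using A B bounded_mat_bnd by blast
  have s: "summable (\<lambda>j. A k j * B j i)"
    by (rule l2_prod_summable_c(2)[OF bnd_row(1)[OF bA] bnd_col(1)[OF bB]])
  show "mat_adj (A **\<^sub>m B) i k = (mat_adj B **\<^sub>m mat_adj A) i k"
    unfolding mat_adj_def mat_mult_def using suminf_cnj[OF s] by (simp add: mult.commute)
qed

lemma ip_adj:
  assumes A: "bounded_mat A" and x: "x \<in> l2" and y: "y \<in> l2"
  shows "ip (mat_apply A x) y = ip x (mat_apply (mat_adj A) y)"
  using bnd_adj(2) A x y bounded_mat_bnd by metis

lemma re_ip_self: "x \<in> l2 \<Longrightarrow> Re (ip x x) = (l2norm x)^2"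
  by (simp add: ip_self)

lemma proj_bnd1:
  assumes P: "bounded_mat P" and PP: "P **\<^sub>m P = P" and aP: "mat_adj P = P"
  shows "bnd P 1"
proof (rule bnd_from[OF P])
  fix y assume y: "y \<in> l2"
  have Py: "mat_apply P y \<in> l2" using P y by simp
  have "(l2norm (mat_apply P y))^2 = Re (ip (mat_apply P y) (mat_apply P y))" by (simp add: re_ip_self[OF Py])
  also have "\<dots> = Re (ip y (mat_apply P (mat_apply P y)))"
    using ip_adj[OF P y Py] aP by simp
  also have "mat_apply P (mat_apply P y) = mat_apply P y"
    using act_mult[OF P P y] PP by simp
  also have "Re (ip y (mat_apply P y)) \<le> cmod (ip y (mat_apply P y))" by (rule complex_Re_le_cmod)
  also have "\<dots> \<le> l2norm y * l2norm (mat_apply P y)" by (rule ip_CS[OF y Py])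
  finally have h: "(l2norm (mat_apply P y))^2 \<le> l2norm y * l2norm (mat_apply P y)" .
  show "l2norm (mat_apply P y) \<le> 1 * l2norm y"
  proof (cases "l2norm (mat_apply P y) = 0")
    case True then show ?thesis using l2norm_nonneg[OF y] by simp
  next
    case False
    then have pos: "l2norm (mat_apply P y) > 0" using l2norm_nonneg[OF Py] by simp
    have "l2norm (mat_apply P y) * l2norm (mat_apply P y) \<le> l2norm y * l2norm (mat_apply P y)"
      using h by (simp add: power2_eq_square)
    then show ?thesis using pos by simp
  qed
qed simp

lemma inv_pos:
  assumes G: "bnd G k" and e: "e = -1 \<or> (e = 1 \<and> k < 1)"
  shows "has_bounded_inverse (mat_diff mat_id (mat_scale e (mat_adj G **\<^sub>m G)))"
proof -
  have k0: "k \<ge> 0" using G by (simp add: bnd_def)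
  have bG: "bounded_mat G" using G bounded_mat_bnd by blast
  have bS: "bnd (mat_adj G **\<^sub>m G) (k * k)" by (rule bnd_mult(1)[OF bnd_adj(1)[OF G] G])
  show ?thesis
  proof (cases "e = 1")
    case True
    then have "k < 1" using e by auto
    then have "k * k < 1" using k0 mult_left_le_one_le[of k k] by linarith
    then show ?thesis using neumann[OF bnd_scale(1)[OF bS, of e]] True by simp
  next
    case False
    then have em: "e = -1" using e by auto
    let ?S = "mat_adj G **\<^sub>m G"
    let ?M = "mat_diff mat_id (mat_scale e ?S)"
    define c where "c = 1 / (1 + k * k)"
    have kk: "k * k \<ge> 0" using k0 by simp
    have p: "1 + k * k > 0" using kk by linarith
    have c0: "c > 0" unfolding c_def using p by simp
    have c1: "c \<le> 1" unfolding c_def by (subst divide_le_eq_1_pos[OF p]) (use kk in linarith)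
    have ck: "c * (k * k) = 1 - c" unfolding c_def using p by (simp add: field_simps)
    let ?T = "mat_diff mat_id (mat_scale (complex_of_real c) ?M)"
    have bM: "bounded_mat ?M" using bG by simp
    have Tact: "mat_apply ?T x = (\<lambda>i. complex_of_real (1 - c) * x i + complex_of_real (- c) * mat_apply ?S x i)"
      if x: "x \<in> l2" for x
    proof -
      have "mat_apply ?T x = (\<lambda>i. x i - complex_of_real c * (x i - e * mat_apply ?S x i))"
        using bG x by simp
      also have "\<dots> = (\<lambda>i. complex_of_real (1 - c) * x i + complex_of_real (- c) * mat_apply ?S x i)"
        by (simp add: em fun_eq_iff algebra_simps)
      finally show ?thesis .
    qed
    have Tb: "bnd ?T (1 - c)"
    proof (rule bnd_from)
      show "bounded_mat ?T" using bG by simp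
      show "1 - c \<ge> 0" using c1 by simp
      fix x assume x: "x \<in> l2"
      let ?Gx = "mat_apply G x"
      let ?Sx = "mat_apply ?S x"
      have Gx: "?Gx \<in> l2" and Sx: "?Sx \<in> l2" using x bG by auto
      have Sxe: "?Sx = mat_apply (mat_adj G) ?Gx" using x bG by simp
      have nS: "l2norm ?Sx \<le> k * l2norm ?Gx" unfolding Sxe by (rule bndD(3)[OF bnd_adj(1)[OF G] Gx])
      have ipS: "Re (ip x ?Sx) = (l2norm ?Gx)^2"
        unfolding Sxe using ip_adj[OF bG x Gx] re_ip_self[OF Gx] by simp
      have "(l2norm (mat_apply ?T x))^2 =
          (l2norm (\<lambda>i. complex_of_real (1 - c) * x i))^2 + (l2norm (\<lambda>i. complex_of_real (- c) * ?Sx i))^2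
          + 2 * Re (ip (\<lambda>i. complex_of_real (1 - c) * x i) (\<lambda>i. complex_of_real (- c) * ?Sx i))"
        unfolding Tact[OF x] by (rule l2norm_add_sq[OF l2_scale[OF x] l2_scale[OF Sx]])
      also have "\<dots> = (1 - c)^2 * (l2norm x)^2 + c^2 * (l2norm ?Sx)^2 - 2 * (1 - c) * c * (l2norm ?Gx)^2"
      proof -
        have n1: "l2norm (\<lambda>i. complex_of_real (1 - c) * x i) = (1 - c) * l2norm x"
        proof -
          have "cmod (complex_of_real (1 - c)) = 1 - c" using c1 by (simp only: norm_of_real)
          then show ?thesis using l2norm_scale[OF x, of "complex_of_real (1 - c)"] by (simp only:)
        qed
        have n2: "l2norm (\<lambda>i. complex_of_real (- c) * ?Sx i) = c * l2norm ?Sx"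
          using l2norm_scale[OF Sx, of "complex_of_real (- c)"] c0 by simp
        have n3: "Re (ip (\<lambda>i. complex_of_real (1 - c) * x i) (\<lambda>i. complex_of_real (- c) * ?Sx i))
             = - ((1 - c) * c * (l2norm ?Gx)^2)"
        proof -
          have "ip (\<lambda>i. complex_of_real (1 - c) * x i) (\<lambda>i. complex_of_real (- c) * ?Sx i)
              = complex_of_real (- ((1 - c) * c)) * ip x ?Sx"
            using ip_scale[OF x Sx, of "complex_of_real (1 - c)" "complex_of_real (- c)"] by simp
          then show ?thesis using ipS by simp
        qed
        show ?thesis by (simp only: n1 n2 n3) (simp add: power2_eq_square algebra_simps)
      qed
      also have "\<dots> \<le> (1 - c)^2 * (l2norm x)^2 + c^2 * (k * l2norm ?Gx)^2 - 2 * (1 - c) * c * (l2norm ?Gx)^2"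
      proof -
        have "(l2norm ?Sx)^2 \<le> (k * l2norm ?Gx)^2" using nS l2norm_nonneg[OF Sx] by (rule power_mono)
        then have "c^2 * (l2norm ?Sx)^2 \<le> c^2 * (k * l2norm ?Gx)^2" by (rule mult_left_mono) simp
        then show ?thesis by linarith
      qed
      also have "\<dots> = (1 - c)^2 * (l2norm x)^2 - (1 - c) * c * (l2norm ?Gx)^2"
      proof -
        have "c^2 * (k * l2norm ?Gx)^2 = c * (c * (k * k)) * (l2norm ?Gx)^2" by (simp add: power2_eq_square)
        also have "\<dots> = c * (1 - c) * (l2norm ?Gx)^2" by (simp only: ck)
        finally show ?thesis by simp
      qed
      also have "\<dots> \<le> ((1 - c) * l2norm x)^2"
      proof -
        have "(1 - c) * c * (l2norm ?Gx)^2 \<ge> 0" using c0 c1 by simp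
        then show ?thesis by (simp add: power_mult_distrib)
      qed
      finally have sq: "(l2norm (mat_apply ?T x))^2 \<le> ((1 - c) * l2norm x)^2" .
      show "l2norm (mat_apply ?T x) \<le> (1 - c) * l2norm x"
        by (rule power2_le_imp_le[OF sq]) (use c1 l2norm_nonneg[OF x] in simp)
    qed
    have "1 - c < 1" using c0 by simp
    from neumann[OF Tb this] obtain R where R: "bounded_mat R"
      and TR: "mat_diff mat_id ?T **\<^sub>m R = mat_id" and RT: "R **\<^sub>m mat_diff mat_id ?T = mat_id"
      unfolding has_bounded_inverse_def by blast
    have Teq: "mat_diff mat_id ?T = mat_scale (complex_of_real c) ?M"
    proof (rule mat_eqI')
      fix x assume x: "x \<in> l2"
      show "mat_apply (mat_diff mat_id ?T) x = mat_apply (mat_scale (complex_of_real c) ?M) x"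
        using bG x by simp
    qed (use bG in simp)+
    have "?M **\<^sub>m mat_scale (complex_of_real c) R = mat_id"
    proof (rule mat_eqI')
      fix x assume x: "x \<in> l2"
      have TR': "mat_scale (complex_of_real c) ?M **\<^sub>m R = mat_id" using TR unfolding Teq .
      have "mat_apply (mat_scale (complex_of_real c) ?M **\<^sub>m R) x = x" by (simp only: TR' apply_id)
      then show "mat_apply (?M **\<^sub>m mat_scale (complex_of_real c) R) x = mat_apply mat_id x"
        using bG R x by (simp add: l2_scale)
    qed (use bG R in auto)
    moreover have "mat_scale (complex_of_real c) R **\<^sub>m ?M = mat_id"
    proof (rule mat_eqI')
      fix x assume x: "x \<in> l2"
      have RT': "R **\<^sub>m mat_scale (complex_of_real c) ?M = mat_id" using RT unfolding Teq .
      have "mat_apply (R **\<^sub>m mat_scale (complex_of_real c) ?M) x = x" by (simp only: RT' apply_id)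
      then show "mat_apply (mat_scale (complex_of_real c) R **\<^sub>m ?M) x = mat_apply mat_id x"
        using bG R x by (simp add: l2_scale l2_diff right_diff_distrib mult.left_commute)
    qed (use bG R in auto)
    moreover have "bounded_mat (mat_scale (complex_of_real c) R)" using R by simp
    ultimately show ?thesis unfolding has_bounded_inverse_def by blast
  qed
qed

lemma proj_facts:
  assumes "orth_proj P"
  shows "bounded_mat P" "bnd P 1" "P **\<^sub>m P = P" "mat_adj P = P"
    "bounded_mat (mat_transpose P)" "bnd (mat_transpose P) 1"
    "mat_transpose P **\<^sub>m mat_transpose P = mat_transpose P" "mat_adj (mat_transpose P) = mat_transpose P"
proof -
  show bP: "bounded_mat P" and PP: "P **\<^sub>m P = P" and aP: "mat_adj P = P"
    using assms unfolding orth_proj_def by auto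
  show b1: "bnd P 1" by (rule proj_bnd1[OF bP PP aP])
  show "bounded_mat (mat_transpose P)" using bP by simp
  show "bnd (mat_transpose P) 1" by (rule bnd_transpose[OF b1])
  have "mat_transpose P **\<^sub>m mat_transpose P = mat_transpose (P **\<^sub>m P)"
    by (simp add: mat_transpose_def mat_mult_def mult.commute)
  then show "mat_transpose P **\<^sub>m mat_transpose P = mat_transpose P" using PP by simp
  have "mat_adj (mat_transpose P) = mat_transpose (mat_adj P)"
    by (simp add: mat_transpose_def mat_adj_def)
  then show "mat_adj (mat_transpose P) = mat_transpose P" using aP by simp
qed

lemma idem_act:
  assumes "bounded_mat P" "P **\<^sub>m P = P" "v \<in> l2"
  shows "mat_apply P (mat_apply P v) = mat_apply P v"
  using act_mult[OF assms(1) assms(1) assms(3)] assms(2) by simp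

lemma part_ii:
  assumes X: "bnd X kX" and e: "e = -1 \<or> (e = 1 \<and> kX < 1)" and P: "orth_proj P"
  shows "has_bounded_inverse
                (mat_diff mat_id (mat_scale e (mat_adj X **\<^sub>m mat_transpose P **\<^sub>m X **\<^sub>m P))) \<and>
              has_bounded_inverse
                (mat_diff mat_id (mat_scale e (X **\<^sub>m P **\<^sub>m mat_adj X **\<^sub>m mat_transpose P)))"
proof -
  note pf = proj_facts[OF P]
  define Pb where "Pb = mat_transpose P"
  have bP: "bounded_mat P" and bPb: "bounded_mat Pb" and bX: "bounded_mat X"
    using pf X bounded_mat_bnd unfolding Pb_def by auto
  have PP: "\<And>v. v \<in> l2 \<Longrightarrow> mat_apply P (mat_apply P v) = mat_apply P v"
    using idem_act[OF pf(1) pf(3)] by blast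
  have PbPb: "\<And>v. v \<in> l2 \<Longrightarrow> mat_apply Pb (mat_apply Pb v) = mat_apply Pb v"
    using idem_act[OF pf(5) pf(7)] unfolding Pb_def by blast
  define G where "G = (Pb **\<^sub>m X) **\<^sub>m P"
  have bndG: "bnd G kX"
    using bnd_mult(1)[OF bnd_mult(1)[OF pf(6) X] pf(2)] unfolding G_def Pb_def by simp
  have bG: "bounded_mat G" using bndG bounded_mat_bnd by blast
  define H where "H = mat_adj G"
  have bndH: "bnd H kX" unfolding H_def by (rule bnd_adj(1)[OF bndG])
  have Heq: "H = P **\<^sub>m (mat_adj X **\<^sub>m Pb)"
    unfolding H_def G_def using adj_mult bP bPb bX pf(4) pf(8) unfolding Pb_def by simp
  have bH: "bounded_mat H" using bndH bounded_mat_bnd by blast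
  have inv1: "has_bounded_inverse (mat_diff mat_id (mat_scale e (mat_adj G **\<^sub>m G)))"
    by (rule inv_pos[OF bndG e])
  have inv2: "has_bounded_inverse (mat_diff mat_id (mat_scale e (G **\<^sub>m H)))"
    using inv_pos[OF bndH e] unfolding H_def by simp
  have e1: "mat_adj X **\<^sub>m mat_transpose P **\<^sub>m X **\<^sub>m P = (mat_adj X **\<^sub>m Pb) **\<^sub>m G"
  proof (rule mat_eqI')
    fix x assume x: "x \<in> l2"
    show "mat_apply (mat_adj X **\<^sub>m mat_transpose P **\<^sub>m X **\<^sub>m P) x = mat_apply ((mat_adj X **\<^sub>m Pb) **\<^sub>m G) x"
      unfolding G_def using bP bPb bX x PbPb by (simp add: Pb_def[symmetric])
  qed (use bP bPb bX bG in \<open>simp_all add: Pb_def[symmetric]\<close>)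
  have e2: "G **\<^sub>m (mat_adj X **\<^sub>m Pb) = G **\<^sub>m H"
  proof (rule mat_eqI')
    fix x assume x: "x \<in> l2"
    show "mat_apply (G **\<^sub>m (mat_adj X **\<^sub>m Pb)) x = mat_apply (G **\<^sub>m H) x"
      unfolding Heq G_def using bP bPb bX x PP by simp
  qed (use bP bPb bX bG bH in simp_all)
  have Y: "has_bounded_inverse (mat_diff mat_id (mat_scale e (mat_adj X **\<^sub>m mat_transpose P **\<^sub>m X **\<^sub>m P)))"
    unfolding e1 by (rule swap_inv[OF _ bG]) (use bX bPb inv2 e2 in simp_all)
  have e3: "X **\<^sub>m P **\<^sub>m mat_adj X **\<^sub>m mat_transpose P = (X **\<^sub>m P) **\<^sub>m H"
  proof (rule mat_eqI')
    fix x assume x: "x \<in> l2"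
    show "mat_apply (X **\<^sub>m P **\<^sub>m mat_adj X **\<^sub>m mat_transpose P) x = mat_apply ((X **\<^sub>m P) **\<^sub>m H) x"
      unfolding Heq using bP bPb bX x PP by (simp add: Pb_def[symmetric])
  qed (use bP bPb bX bH in \<open>simp_all add: Pb_def[symmetric]\<close>)
  have e4: "H **\<^sub>m (X **\<^sub>m P) = mat_adj G **\<^sub>m G"
  proof (rule mat_eqI')
    fix x assume x: "x \<in> l2"
    show "mat_apply (H **\<^sub>m (X **\<^sub>m P)) x = mat_apply (mat_adj G **\<^sub>m G) x"
    proof -
      have aG: "mat_adj G = P **\<^sub>m (mat_adj X **\<^sub>m Pb)" using Heq unfolding H_def .
      show ?thesis unfolding aG Heq unfolding G_def using bP bPb bX x PbPb by simp
    qed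
  qed (use bP bPb bX bG bH in simp_all)
  have Yt: "has_bounded_inverse (mat_diff mat_id (mat_scale e (X **\<^sub>m P **\<^sub>m mat_adj X **\<^sub>m mat_transpose P)))"
    unfolding e3 by (rule swap_inv[OF _ bH]) (use bX bP inv1 e4 in simp_all)
  show ?thesis using Y Yt by blast
qed

theorem mainTheorem3:
  fixes \<epsilon> :: complex and \<Phi> \<Psi> :: cmat
  assumes eps: "\<epsilon> = 1 \<or> \<epsilon> = -1"
    and bPhi: "bounded_mat \<Phi>" and bPsi: "bounded_mat \<Psi>"
    and h1: "\<Phi> **\<^sub>m mat_adj \<Phi> = mat_add mat_id (mat_scale \<epsilon> (\<Psi> **\<^sub>m mat_adj \<Psi>))"
    and h2: "mat_adj \<Phi> **\<^sub>m \<Phi> = mat_add mat_id (mat_scale \<epsilon> (mat_transpose \<Psi> **\<^sub>m mat_conj \<Psi>))"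
    and h3: "\<Phi> **\<^sub>m mat_transpose \<Psi> = mat_scale \<epsilon> (\<Psi> **\<^sub>m mat_transpose \<Phi>)"
    and h4: "mat_adj \<Phi> **\<^sub>m \<Psi> = mat_scale \<epsilon> (mat_transpose \<Psi> **\<^sub>m mat_conj \<Phi>)"
    and inv: "has_bounded_inverse \<Phi>"
  shows "let X = mat_conj \<Psi> **\<^sub>m mat_inv \<Phi> in
           (\<epsilon> = 1 \<longrightarrow> op_norm X < 1) \<and>
           (\<forall>P. orth_proj P \<longrightarrow>
              has_bounded_inverse
                (mat_diff mat_id (mat_scale \<epsilon> (mat_adj X **\<^sub>m mat_transpose P **\<^sub>m X **\<^sub>m P))) \<and>
              has_bounded_inverse
                (mat_diff mat_id (mat_scale \<epsilon> (X **\<^sub>m P **\<^sub>m mat_adj X **\<^sub>m mat_transpose P))))"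
proof -
  define Fi where "Fi = mat_inv \<Phi>"
  have Fi: "bounded_mat Fi \<and> \<Phi> **\<^sub>m Fi = mat_id \<and> Fi **\<^sub>m \<Phi> = mat_id"
    unfolding Fi_def mat_inv_def using inv unfolding has_bounded_inverse_def by (rule someI_ex)
  then have bFi: "bounded_mat Fi" and FFi: "\<Phi> **\<^sub>m Fi = mat_id" by auto
  define X where "X = mat_conj \<Psi> **\<^sub>m Fi"
  obtain C0 where C0: "bnd \<Psi> C0" using bPsi bounded_mat_bnd by blast
  define C where "C = max C0 1"
  have C1: "C \<ge> 1" unfolding C_def by simp
  have bA: "bnd (mat_conj \<Psi>) C" unfolding C_def by (rule bnd_mono[OF bnd_conj[OF C0]]) simp
  have bAc: "bounded_mat (mat_conj \<Psi>)" using bPsi by simp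
  have bX: "bounded_mat X" unfolding X_def using bAc bFi by simp
  define \<kappa> where "\<kappa> = C / sqrt (1 + C^2)"
  have k0: "\<kappa> \<ge> 0" and k1: "\<kappa> < 1"
  proof -
    show "\<kappa> \<ge> 0" unfolding \<kappa>_def using C1 by simp
    have "C^2 < 1 + C^2" by simp
    then have "sqrt (C^2) < sqrt (1 + C^2)" by (rule real_sqrt_less_mono)
    then have "C < sqrt (1 + C^2)" using C1 by simp
    moreover have "sqrt (1 + C^2) > 0" by (simp add: add_pos_nonneg)
    ultimately show "\<kappa> < 1" unfolding \<kappa>_def by (simp add: divide_less_eq)
  qed
  have Xest: "l2norm (mat_apply X x) \<le> \<kappa> * l2norm x" if e1: "\<epsilon> = 1" and x: "x \<in> l2" for x
  proof -
    let ?u = "mat_apply Fi x"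
    let ?w = "mat_apply (mat_conj \<Psi>) ?u"
    have u: "?u \<in> l2" and w: "?w \<in> l2" using bFi bAc x by auto
    have Xw: "mat_apply X x = ?w" unfolding X_def using bAc bFi x by simp
    have Fu: "mat_apply \<Phi> ?u = x"
      using act_mult[OF bPhi bFi x] FFi by simp
    have Fu2: "mat_apply \<Phi> ?u \<in> l2" using bPhi u by simp
    have "(l2norm x)^2 = Re (ip (mat_apply \<Phi> ?u) (mat_apply \<Phi> ?u))"
      unfolding Fu by (simp add: re_ip_self[OF x])
    also have "\<dots> = Re (ip ?u (mat_apply (mat_adj \<Phi>) (mat_apply \<Phi> ?u)))"
      using ip_adj[OF bPhi u Fu2] by simp
    also have "mat_apply (mat_adj \<Phi>) (mat_apply \<Phi> ?u) = mat_apply (mat_adj \<Phi> **\<^sub>m \<Phi>) ?u"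
      using bPhi u by simp
    also have "\<dots> = (\<lambda>i. ?u i + mat_apply (mat_adj (mat_conj \<Psi>)) ?w i)"
      unfolding h2 e1 transpose_eq using bPsi u by simp
    also have "Re (ip ?u (\<lambda>i. ?u i + mat_apply (mat_adj (mat_conj \<Psi>)) ?w i))
        = (l2norm ?u)^2 + (l2norm ?w)^2"
    proof -
      have aw: "mat_apply (mat_adj (mat_conj \<Psi>)) ?w \<in> l2" using bPsi w by simp
      have "ip ?u (\<lambda>i. ?u i + mat_apply (mat_adj (mat_conj \<Psi>)) ?w i)
          = ip ?u ?u + ip ?u (mat_apply (mat_adj (mat_conj \<Psi>)) ?w)"
        by (rule ip_add2[OF u u aw])
      also have "ip ?u (mat_apply (mat_adj (mat_conj \<Psi>)) ?w) = ip ?w ?w"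
        using ip_adj[OF bAc u w] by simp
      finally show ?thesis using re_ip_self[OF u] re_ip_self[OF w] by simp
    qed
    finally have sum: "(l2norm x)^2 = (l2norm ?u)^2 + (l2norm ?w)^2" .
    have "l2norm ?w \<le> C * l2norm ?u" by (rule bndD(3)[OF bA u])
    then have "(l2norm ?w)^2 \<le> (C * l2norm ?u)^2" using l2norm_nonneg[OF w] by (intro power_mono) auto
    then have "(l2norm ?w)^2 \<le> C^2 * ((l2norm x)^2 - (l2norm ?w)^2)" using sum by (simp add: power_mult_distrib)
    then have "(l2norm ?w)^2 * (1 + C^2) \<le> C^2 * (l2norm x)^2" by (simp add: algebra_simps)
    then have "(l2norm ?w)^2 \<le> C^2 * (l2norm x)^2 / (1 + C^2)"
      by (simp add: le_divide_eq add_pos_nonneg)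
    also have "\<dots> = (\<kappa> * l2norm x)^2"
      unfolding \<kappa>_def by (simp add: power_mult_distrib power_divide add_pos_nonneg)
    finally have "(l2norm ?w)^2 \<le> (\<kappa> * l2norm x)^2" .
    then have "l2norm ?w \<le> \<kappa> * l2norm x"
      by (rule power2_le_imp_le) (use k0 l2norm_nonneg[OF x] in simp)
    then show ?thesis unfolding Xw .
  qed
  have part1: "\<epsilon> = 1 \<longrightarrow> op_norm X < 1"
  proof
    assume e1: "\<epsilon> = 1"
    have "op_norm X \<le> \<kappa>"
      unfolding op_norm_def
    proof (rule cSup_least)
      show "{l2norm (mat_apply X x) |x. x \<in> l2 \<and> l2norm x \<le> 1} \<noteq> {}"
        using l2_zero l2norm_zero by fastforce
      fix s assume "s \<in> {l2norm (mat_apply X x) |x. x \<in> l2 \<and> l2norm x \<le> 1}"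
      then obtain x where x: "x \<in> l2" "l2norm x \<le> 1" and s: "s = l2norm (mat_apply X x)" by blast
      have "s \<le> \<kappa> * l2norm x" unfolding s by (rule Xest[OF e1 x(1)])
      also have "\<dots> \<le> \<kappa> * 1" by (intro mult_left_mono x(2) k0)
      finally show "s \<le> \<kappa>" by simp
    qed
    then show "op_norm X < 1" using k1 by simp
  qed
  obtain kX where kX: "bnd X kX" and kX1: "\<epsilon> = 1 \<longrightarrow> kX < 1"
  proof (cases "\<epsilon> = 1")
    case True
    have "bnd X \<kappa>" by (rule bnd_from[OF bX k0 Xest[OF True]])
    then show ?thesis using that k1 by blast
  next
    case False
    obtain k where "bnd X k" using bX bounded_mat_bnd by blast
    then show ?thesis using that False by blast
  qed
  have ecase: "\<epsilon> = -1 \<or> (\<epsilon> = 1 \<and> kX < 1)" using eps kX1 by auto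
  show ?thesis
    unfolding Let_def Fi_def[symmetric] X_def[symmetric]
    using part1 part_ii[OF kX ecase] by blast
qed

end
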